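(* Let $1\le k\le n-1$. Then $\mathrm{Ker}\,R_{n-k}^* = \mathrm{Ker}\,(R_k^*\circ I)$, as subspaces of $\mathcal{M}(G(n,n-k))$.
   Context: $G(n,m)$ is the Grassmannian of $m$-dimensional subspaces of $\mathbb{R}^n$. For $E\in G(n,m)$, $R_mf(E)=\int_{S^{n-1}\cap E}f\,d\sigma_E$ ($\sigma_E$ Haar probability on $S^{n-1}\cap E$), $R_m:C(S^{n-1})\to C(G(n,m))$, and $R_m^*:\mathcal{M}(G(n,m))\to\mathcal{M}(S^{n-1})$ is its dual on signed finite Borel measures. $I:\mathcal{M}(G(n,n-k))\to\mathcal{M}(G(n,k))$ is $I(\mu)=\mu^\perp$, $\mu^\perp(A)=\mu(\{E^\perp:E\in A\})$. *)

theory Defs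
  imports "HOL-Analysis.Analysis"
begin

text \<open>Ambient space: a Euclidean space 'a with n = DIM('a).\<close>

definition grass :: "nat \<Rightarrow> ('a::euclidean_space) set set" where
  "grass m = {E. subspace E \<and> dim E = m}"

text \<open>Standard metric on the Grassmannian: Hausdorff distance of the unit balls.\<close>
definition gdist :: "('a::euclidean_space) set \<Rightarrow> 'a set \<Rightarrow> real" where
  "gdist E F = max (SUP x\<in>cball 0 1 \<inter> E. infdist x (cball 0 1 \<inter> F))
                   (SUP y\<in>cball 0 1 \<inter> F. infdist y (cball 0 1 \<inter> E))"

definition grass_open :: "nat \<Rightarrow> ('a::euclidean_space) set set \<Rightarrow> bool" where
  "grass_open m U \<longleftrightarrow> U \<subseteq> grass m \<and>
     (\<forall>E\<in>U. \<exists>e>0. \<forall>F\<in>grass m. gdist E F < e \<longrightarrow> F \<in> U)"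

definition grass_borel :: "nat \<Rightarrow> ('a::euclidean_space) set measure" where
  "grass_borel m = sigma (grass m) {U. grass_open m U}"

text \<open>Signed finite Borel measures on a measurable space, represented as pairs
  (M1, M2) of finite measures standing for M1 - M2.\<close>
definition signed_measures :: "'b measure \<Rightarrow> ('b measure \<times> 'b measure) set" where
  "signed_measures S = {(M1, M2). finite_measure M1 \<and> finite_measure M2 \<and>
                                   sets M1 = sets S \<and> sets M2 = sets S}"

definition signed_integral :: "('b measure \<times> 'b measure) \<Rightarrow> ('b \<Rightarrow> real) \<Rightarrow> real" where
  "signed_integral \<mu> g = (\<integral>x. g x \<partial>(fst \<mu>)) - (\<integral>x. g x \<partial>(snd \<mu>))"

definition haar_sphere :: "('a::euclidean_space) set \<Rightarrow> 'a measure" where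
  "haar_sphere E = (THE \<sigma>. sets \<sigma> = sets (restrict_space borel (sphere 0 1 \<inter> E)) \<and>
       emeasure \<sigma> (space \<sigma>) = 1 \<and>
       (\<forall>T. orthogonal_transformation T \<and> T ` E = E \<longrightarrow> distr \<sigma> \<sigma> T = \<sigma>))"

definition radon :: "(('a::euclidean_space) \<Rightarrow> real) \<Rightarrow> 'a set \<Rightarrow> real" where
  "radon f E = (\<integral>x. f x \<partial>(haar_sphere E))"

text \<open>Kernel of the dual R_m^*: \<mu> with R_m^* \<mu> = 0, i.e. (by definition of the dual)
  \<langle>\<mu>, R_m f\<rangle> = 0 for every f \<in> C(S^{n-1}).\<close>
definition ker_Rstar :: "nat \<Rightarrow> (('a::euclidean_space) set measure \<times> 'a set measure) set" where
  "ker_Rstar m = {\<mu> \<in> signed_measures (grass_borel m).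
      \<forall>f::'a \<Rightarrow> real. continuous_on (sphere 0 1) f \<longrightarrow> signed_integral \<mu> (radon f) = 0}"

text \<open>I(\<mu>) = \<mu>^\<perp>: push-forward of \<mu> on G(n,n-k) under E \<mapsto> E^\<perp>, a measure on G(n,k).\<close>
definition perp_measure :: "nat \<Rightarrow> (('a::euclidean_space) set measure \<times> 'a set measure)
                               \<Rightarrow> ('a set measure \<times> 'a set measure)" where
  "perp_measure k \<mu> = (distr (fst \<mu>) (grass_borel k) orthogonal_comp,
                       distr (snd \<mu>) (grass_borel k) orthogonal_comp)"

end

theory Submission
  imports Defs
begin


section \<open>Orthogonal projection\<close>

definition proj :: "('a::euclidean_space) set \<Rightarrow> 'a \<Rightarrow> 'a" where
  "proj E a = (THE y. y \<in> E \<and> a - y \<in> orthogonal_comp E)"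

lemma proj_ex1:
  fixes E :: "'a::euclidean_space set"
  assumes "subspace E"
  shows "\<exists>!y. y \<in> E \<and> a - y \<in> orthogonal_comp E"
proof -
  obtain y z where "y \<in> E" "z \<in> orthogonal_comp E" "a = y + z"
    using subspace_sum_orthogonal_comp[OF assms] by (metis UNIV_I set_plus_elim)
  then have ex: "y \<in> E \<and> a - y \<in> orthogonal_comp E" by simp
  show ?thesis
  proof (rule ex1I[of _ y])
    show "y \<in> E \<and> a - y \<in> orthogonal_comp E" by (fact ex)
    fix y' assume y': "y' \<in> E \<and> a - y' \<in> orthogonal_comp E"
    have "y - y' \<in> E" using ex y' assms by (simp add: subspace_diff)
    moreover have "y - y' \<in> orthogonal_comp E"
    proof -
      have "(a - y') - (a - y) \<in> orthogonal_comp E"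
        using ex y' subspace_diff[OF subspace_orthogonal_comp] by blast
      then show ?thesis by simp
    qed
    ultimately have "y - y' \<in> E \<inter> orthogonal_comp E" by blast
    then show "y' = y" using orthogonal_Int_0[OF assms] by auto
  qed
qed

lemma proj_in:
  assumes "subspace E" shows "proj E a \<in> E"
  using theI'[OF proj_ex1[OF assms, of a]] unfolding proj_def by blast

lemma proj_perp:
  assumes "subspace E" shows "a - proj E a \<in> orthogonal_comp E"
  using theI'[OF proj_ex1[OF assms, of a]] unfolding proj_def by blast

lemma proj_unique:
  assumes "subspace E" "y \<in> E" "a - y \<in> orthogonal_comp E"
  shows "proj E a = y"
  using proj_ex1[OF assms(1), of a] proj_in[OF assms(1), of a] proj_perp[OF assms(1), of a] assms
  by blast

lemma proj_self: assumes "subspace E" "x \<in> E" shows "proj E x = x"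
  using proj_unique[OF assms] by (simp add: subspace_0[OF subspace_orthogonal_comp])

lemma orth_compD: "x \<in> orthogonal_comp E \<Longrightarrow> y \<in> E \<Longrightarrow> y \<bullet> x = 0"
  by (auto simp: orthogonal_comp_def orthogonal_def)

lemma orth_compD': "x \<in> orthogonal_comp E \<Longrightarrow> y \<in> E \<Longrightarrow> x \<bullet> y = 0"
  by (auto simp: orthogonal_comp_def orthogonal_def inner_commute)

lemma proj_inner:
  assumes "subspace E" "x \<in> E" shows "proj E a \<bullet> x = a \<bullet> x"
proof -
  have "(a - proj E a) \<bullet> x = 0" using orth_compD'[OF proj_perp[OF assms(1)] assms(2)] .
  then show ?thesis by (simp add: inner_diff_left)
qed

lemma proj_inner': 
  assumes "subspace E" "x \<in> E" shows "x \<bullet> proj E a = x \<bullet> a"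
  using proj_inner[OF assms] by (simp add: inner_commute)

lemma proj_zero_iff:
  assumes "subspace E" shows "proj E a = 0 \<longleftrightarrow> a \<in> orthogonal_comp E"
proof
  assume "proj E a = 0" then show "a \<in> orthogonal_comp E" using proj_perp[OF assms, of a] by simp
next
  assume "a \<in> orthogonal_comp E"
  then show "proj E a = 0" using proj_unique[OF assms subspace_0[OF assms], of a] by simp
qed

lemma proj_linear: assumes "subspace E" shows "linear (proj E)"
proof (rule linearI)
  fix x y
  show "proj E (x + y) = proj E x + proj E y"
  proof (rule proj_unique[OF assms])
    show "proj E x + proj E y \<in> E" by (simp add: assms proj_in subspace_add)
    have "(x - proj E x) + (y - proj E y) \<in> orthogonal_comp E"
      by (simp add: assms proj_perp subspace_add subspace_orthogonal_comp)
    then show "x + y - (proj E x + proj E y) \<in> orthogonal_comp E" by (simp add: algebra_simps)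
  qed
next
  fix c :: real and x
  show "proj E (c *\<^sub>R x) = c *\<^sub>R proj E x"
  proof (rule proj_unique[OF assms])
    show "c *\<^sub>R proj E x \<in> E" by (simp add: assms proj_in subspace_scale)
    have "c *\<^sub>R (x - proj E x) \<in> orthogonal_comp E"
      by (simp add: assms proj_perp subspace_scale subspace_orthogonal_comp)
    then show "c *\<^sub>R x - c *\<^sub>R proj E x \<in> orthogonal_comp E" by (simp add: algebra_simps)
  qed
qed

lemma proj_orth_comp:
  fixes E :: "'a::euclidean_space set"
  assumes "subspace E" shows "proj (orthogonal_comp E) a = a - proj E a"
proof (rule proj_unique[OF subspace_orthogonal_comp])
  show "a - proj E a \<in> orthogonal_comp E" by (rule proj_perp[OF assms])
  have "proj E a \<in> orthogonal_comp (orthogonal_comp E)"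
    using proj_in[OF assms] orthogonal_comp_subset by blast
  then show "a - (a - proj E a) \<in> orthogonal_comp (orthogonal_comp E)" by simp
qed

lemma norm_proj_pyth:
  assumes "subspace E"
  shows "(norm a)\<^sup>2 = (norm (proj E a))\<^sup>2 + (norm (a - proj E a))\<^sup>2"
proof -
  have "orthogonal (proj E a) (a - proj E a)"
    using orth_compD[OF proj_perp[OF assms] proj_in[OF assms]] by (simp add: orthogonal_def)
  then have "(norm (proj E a + (a - proj E a)))\<^sup>2 = (norm (proj E a))\<^sup>2 + (norm (a - proj E a))\<^sup>2"
    by (rule norm_add_Pythagorean)
  then show ?thesis by simp
qed

lemma norm_proj_le: assumes "subspace E" shows "norm (proj E a) \<le> norm a"
proof -
  have "(norm (proj E a))\<^sup>2 \<le> (norm a)\<^sup>2" using norm_proj_pyth[OF assms, of a] by simp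
  then show ?thesis using power2_le_imp_le by force
qed

lemma norm_proj_orth_sq:
  fixes E :: "'a::euclidean_space set"
  assumes "subspace E"
  shows "(norm (proj (orthogonal_comp E) a))\<^sup>2 = (norm a)\<^sup>2 - (norm (proj E a))\<^sup>2"
  using norm_proj_pyth[OF assms, of a] proj_orth_comp[OF assms] by simp

lemma norm_proj_inner: assumes "subspace E" shows "(norm (proj E a))\<^sup>2 = proj E a \<bullet> a"
  using proj_inner[OF assms proj_in[OF assms]] by (simp add: power2_norm_eq_inner inner_commute)

lemma continuous_proj: assumes "subspace E" shows "continuous_on A (proj E)"
  using linear_continuous_on[OF linear_conv_bounded_linear[THEN iffD1, OF proj_linear[OF assms]]] .

lemma proj_borel: assumes "subspace E" shows "proj E \<in> borel_measurable borel"
  using continuous_proj[OF assms, of UNIV] borel_measurable_continuous_onI by blast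

lemma dim_orth_comp:
  fixes E :: "'a::euclidean_space set"
  assumes "subspace E"
  shows "dim E + dim (orthogonal_comp E) = DIM('a)"
proof -
  have "dim {x + y |x y. x \<in> E \<and> y \<in> orthogonal_comp E} + dim (E \<inter> orthogonal_comp E) = dim E + dim (orthogonal_comp E)"
    by (rule dim_sums_Int[OF assms subspace_orthogonal_comp])
  moreover have "{x + y |x y. x \<in> E \<and> y \<in> orthogonal_comp E} = UNIV"
    using subspace_sum_orthogonal_comp[OF assms] unfolding set_plus_def by blast
  ultimately show ?thesis
    by (simp add: orthogonal_Int_0[OF assms])
qed

lemma orth_comp_grass:
  fixes E :: "'a::euclidean_space set"
  assumes "E \<in> grass m"
  shows "orthogonal_comp E \<in> grass (DIM('a) - m)"
  using assms dim_orth_comp[of E] subspace_orthogonal_comp[of E]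
  by (auto simp: grass_def)

lemma orth_map_subspaces:
  fixes E F :: "'a::euclidean_space set"
  assumes E: "subspace E" and F: "subspace F" and d: "dim E = dim F"
  obtains U where "orthogonal_transformation U" "U ` E = F"
proof -
  obtain f g where f: "linear f" "linear g" "f ` E = F" "g ` F = E"
                    "\<And>x. x \<in> E \<Longrightarrow> norm(f x) = norm x"
    using isometries_subspaces[OF E F d] by metis
  have d2: "dim (orthogonal_comp E) = dim (orthogonal_comp F)"
    using dim_orth_comp[OF E] dim_orth_comp[OF F] d by simp
  obtain f' g' where f': "linear f'" "f' ` orthogonal_comp E = orthogonal_comp F"
                    "\<And>x. x \<in> orthogonal_comp E \<Longrightarrow> norm(f' x) = norm x"
    using isometries_subspaces[OF subspace_orthogonal_comp subspace_orthogonal_comp d2] by metis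
  define U where "U x = f (proj E x) + f' (x - proj E x)" for x
  have lin: "linear U"
  proof -
    have "linear (\<lambda>x. x - proj E x)"
      using proj_linear[OF E] by (simp add: linear_compose_sub linear_id[unfolded id_def])
    then show ?thesis unfolding U_def[abs_def]
      using linear_compose[OF proj_linear[OF E] f(1)] linear_compose[OF _ f'(1)]
      by (intro linear_compose_add) (auto simp: o_def)
  qed
  have nU: "norm (U x) = norm x" for x
  proof -
    have 1: "f (proj E x) \<in> F" using f(3) proj_in[OF E] by blast
    have 2: "f' (x - proj E x) \<in> orthogonal_comp F" using f'(2) proj_perp[OF E] by blast
    have "orthogonal (f (proj E x)) (f' (x - proj E x))"
      using orth_compD[OF 2 1] by (simp add: orthogonal_def)
    then have "(norm (U x))\<^sup>2 = (norm (f (proj E x)))\<^sup>2 + (norm (f' (x - proj E x)))\<^sup>2"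
      unfolding U_def by (rule norm_add_Pythagorean)
    also have "\<dots> = (norm (proj E x))\<^sup>2 + (norm (x - proj E x))\<^sup>2"
      using f(5)[OF proj_in[OF E]] f'(3)[OF proj_perp[OF E]] by simp
    also have "\<dots> = (norm x)\<^sup>2" by (rule norm_proj_pyth[OF E, symmetric])
    finally show ?thesis by simp
  qed
  have oU: "orthogonal_transformation U" using lin nU by (simp add: orthogonal_transformation)
  have UE: "U x = f x" if "x \<in> E" for x
    using that proj_self[OF E that] linear_0[OF f'(1)] by (simp add: U_def)
  have "U ` E = F" using UE f(3) by (auto simp: image_iff)
  with oU that show ?thesis by blast
qed

lemma orth_trans_inner: "orthogonal_transformation T \<Longrightarrow> T x \<bullet> T y = x \<bullet> y"
  by (simp add: orthogonal_transformation_def)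

lemma orth_trans_maps_orth_comp:
  fixes T :: "'a::euclidean_space \<Rightarrow> 'a"
  assumes T: "orthogonal_transformation T" and TE: "T ` E = E"
  shows "T ` orthogonal_comp E \<subseteq> orthogonal_comp E"
proof
  fix y assume "y \<in> T ` orthogonal_comp E"
  then obtain x where x: "x \<in> orthogonal_comp E" "y = T x" by blast
  show "y \<in> orthogonal_comp E"
    unfolding orthogonal_comp_def orthogonal_def
  proof (intro CollectI ballI)
    fix z assume "z \<in> E"
    then obtain w where "w \<in> E" "z = T w" using TE by blast
    then show "z \<bullet> y = 0" using x orth_trans_inner[OF T] orth_compD by metis
  qed
qed

lemma proj_commute_orth:
  fixes T :: "'a::euclidean_space \<Rightarrow> 'a"
  assumes E: "subspace E" and T: "orthogonal_transformation T" and TE: "T ` E = E"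
  shows "proj E (T x) = T (proj E x)"
proof (rule proj_unique[OF E])
  show "T (proj E x) \<in> E" using TE proj_in[OF E] by blast
  have "T (x - proj E x) \<in> orthogonal_comp E"
    using orth_trans_maps_orth_comp[OF T TE] proj_perp[OF E] by blast
  then show "T x - T (proj E x) \<in> orthogonal_comp E"
    using linear_diff[OF orthogonal_transformation_linear[OF T]] by simp
qed



section \<open>Rotation invariance of Lebesgue measure\<close>

lemma emeasure_lborel_ball_indep:
  fixes c d :: "'a::euclidean_space"
  shows "emeasure lborel (ball c r) = emeasure lborel (ball d r)"
proof (cases "r \<ge> 0")
  case True
  have "emeasure lborel (ball c r) = emeasure lebesgue (ball c r)" by simp
  also have "\<dots> = ennreal (r ^ DIM('a)) * emeasure lebesgue (ball (0 :: 'a) 1)"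
    by (rule emeasure_lebesgue_ball_conv_unit_ball[OF True])
  also have "\<dots> = emeasure lebesgue (ball d r)"
    by (rule emeasure_lebesgue_ball_conv_unit_ball[OF True, symmetric])
  also have "\<dots> = emeasure lborel (ball d r)" by simp
  finally show ?thesis .
next
  case False then have "ball c r = {}" "ball d r = {}" by (simp_all add: ball_empty)
  then show ?thesis by metis
qed

lemma negligible_borel_null:
  fixes N :: "'a::euclidean_space set"
  assumes "negligible N" "N \<in> sets borel"
  shows "N \<in> null_sets lborel"
  using assms negligible_iff_null_sets null_sets_completion_iff by (metis sets_lborel)

lemma lborel_orth_ge:
  fixes T :: "'a::euclidean_space \<Rightarrow> 'a"
  assumes T: "orthogonal_transformation T" and U: "open U"
  shows "emeasure lborel U \<le> emeasure lborel (T ` U)"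
proof -
  define K where "K = {(c, r::real). 0 < r \<and> ball c r \<subseteq> U}"
  have cov: "\<exists>i. i \<in> K \<and> x \<in> ball (fst i) (snd i) \<and> snd i < d" if "x \<in> U" "0 < d" for x d
  proof -
    obtain e where e: "e > 0" "ball x e \<subseteq> U" using U \<open>x \<in> U\<close> open_contains_ball by blast
    define r where "r = min e (d/2)"
    have "(x, r) \<in> K" using e \<open>0 < d\<close> by (auto simp: K_def r_def)
    moreover have "x \<in> ball (fst (x, r)) (snd (x, r))" "snd (x, r) < d"
      using e \<open>0 < d\<close> by (auto simp: r_def)
    ultimately show ?thesis by blast
  qed
  obtain C where C: "countable C" "C \<subseteq> K"
     "pairwise (\<lambda>i j. disjnt (ball (fst i) (snd i)) (ball (fst j) (snd j))) C"
     "negligible(U - (\<Union>i \<in> C. ball (fst i) (snd i)))"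
    by (rule Vitali_covering_theorem_balls[of U K fst snd, OF cov])
  define B where "B i = ball (fst i) (snd i)" for i :: "'a \<times> real"
  define B' where "B' i = ball (T (fst i)) (snd i)" for i :: "'a \<times> real"
  have BU: "B i \<subseteq> U" if "i \<in> C" for i
  proof -
    obtain c r where "i = (c, r)" by (cases i)
    then show ?thesis using that C(2) by (auto simp: B_def K_def)
  qed
  have disjB: "disjoint_family_on B C"
    using C(3) unfolding disjoint_family_on_def pairwise_def disjnt_def B_def by blast
  have B'eq: "B' i = T ` B i" for i
    using image_orthogonal_transformation_ball[OF T] by (simp add: B_def B'_def)
  have injT: "inj T" using orthogonal_transformation_inj[OF T] .
  have disjB': "disjoint_family_on B' C"
    using disjB unfolding disjoint_family_on_def B'eq
    by (metis image_empty image_Int[OF injT])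
  have negl: "U - (\<Union>i\<in>C. B i) \<in> null_sets lborel"
  proof (rule negligible_borel_null)
    show "negligible (U - (\<Union>i\<in>C. B i))" using C(4) by (simp add: B_def)
    have "U \<in> sets borel" "(\<Union>i\<in>C. B i) \<in> sets borel" using U by (auto simp: B_def intro!: borel_open)
    then show "U - (\<Union>i\<in>C. B i) \<in> sets borel" by blast
  qed
  have "emeasure lborel U = emeasure lborel ((\<Union>i\<in>C. B i) \<union> (U - (\<Union>i\<in>C. B i)))"
    using BU by (intro arg_cong[where f="emeasure lborel"]) blast
  also have "\<dots> = emeasure lborel (\<Union>i\<in>C. B i)"
    by (rule emeasure_Un_null_set[OF _ negl]) (auto simp: B_def intro!: borel_open)
  also have "\<dots> = (\<integral>\<^sup>+i. emeasure lborel (B i) \<partial>count_space C)"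
    by (rule emeasure_UN_countable[OF _ C(1) disjB]) (auto simp: B_def)
  also have "\<dots> = (\<integral>\<^sup>+i. emeasure lborel (B' i) \<partial>count_space C)"
    unfolding B_def B'_def by (metis emeasure_lborel_ball_indep)
  also have "\<dots> = emeasure lborel (\<Union>i\<in>C. B' i)"
    by (rule emeasure_UN_countable[OF _ C(1) disjB', symmetric]) (auto simp: B'_def)
  also have "\<dots> \<le> emeasure lborel (T ` U)"
  proof (rule emeasure_mono)
    show "(\<Union>i\<in>C. B' i) \<subseteq> T ` U" using BU B'eq by blast
    have "open (T ` U)"
      using open_bijective_linear_image_eq[OF orthogonal_transformation_linear[OF T] orthogonal_transformation_bij[OF T]] U
      by blast
    then show "T ` U \<in> sets lborel" by simp
  qed
  finally show ?thesis .
qed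

lemma lborel_orth_eq:
  fixes T :: "'a::euclidean_space \<Rightarrow> 'a"
  assumes T: "orthogonal_transformation T" and U: "open U"
  shows "emeasure lborel (T ` U) = emeasure lborel U"
proof (rule antisym)
  show "emeasure lborel U \<le> emeasure lborel (T ` U)" by (rule lborel_orth_ge[OF T U])
  have T': "orthogonal_transformation (inv T)" by (rule orthogonal_transformation_inv[OF T])
  have "open (T ` U)"
    using open_bijective_linear_image_eq[OF orthogonal_transformation_linear[OF T] orthogonal_transformation_bij[OF T]] U
    by blast
  then have "emeasure lborel (T ` U) \<le> emeasure lborel (inv T ` T ` U)" by (rule lborel_orth_ge[OF T'])
  also have "inv T ` T ` U = U"
    using orthogonal_transformation_inj[OF T] by (simp add: image_image)
  finally show "emeasure lborel (T ` U) \<le> emeasure lborel U" .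
qed

lemma lborel_orth_distr:
  fixes T :: "'a::euclidean_space \<Rightarrow> 'a"
  assumes T: "orthogonal_transformation T"
  shows "distr lborel borel T = lborel"
proof (rule measure_eqI_generator_eq[where E="{S. open S}" and \<Omega>=UNIV and A="\<lambda>i. ball 0 (real i)"])
  show "Int_stable {S :: 'a set. open S}" by (auto simp: Int_stable_def)
  show "{S :: 'a set. open S} \<subseteq> Pow UNIV" by simp
  have Tm: "T \<in> borel_measurable borel"
    using linear_continuous_on[OF linear_conv_bounded_linear[THEN iffD1, OF orthogonal_transformation_linear[OF T]]]
    borel_measurable_continuous_onI by blast
  have T': "orthogonal_transformation (inv T)" by (rule orthogonal_transformation_inv[OF T])
  show "emeasure (distr lborel borel T) X = emeasure lborel X" if "X \<in> {S. open S}" for X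
  proof -
    have X: "open X" using that by simp
    have "emeasure (distr lborel borel T) X = emeasure lborel (T -` X)"
      using X Tm by (simp add: emeasure_distr)
    also have "T -` X = inv T ` X"
      using orthogonal_transformation_bij[OF T] by (simp add: bij_vimage_eq_inv_image)
    also have "emeasure lborel (inv T ` X) = emeasure lborel X" by (rule lborel_orth_eq[OF T' X])
    finally show ?thesis .
  qed
  show "sets (distr lborel borel T) = sigma_sets UNIV {S. open S}" by (simp add: sets_borel)
  show "sets lborel = sigma_sets UNIV {S :: 'a set. open S}" by (simp add: sets_borel)
  show "range (\<lambda>i. ball 0 (real i)) \<subseteq> {S :: 'a set. open S}" by auto
  show "(\<Union>i. ball (0::'a) (real i)) = UNIV"
    by (auto simp: dist_norm) (metis reals_Archimedean2)
  show "emeasure (distr lborel borel T) (ball 0 (real i)) \<noteq> \<infinity>" for i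
  proof -
    have "emeasure (distr lborel borel T) (ball 0 (real i)) = emeasure lborel (T -` ball 0 (real i))"
      using Tm by (simp add: emeasure_distr)
    also have "T -` ball 0 (real i) = inv T ` ball 0 (real i)"
      using orthogonal_transformation_bij[OF T] by (simp add: bij_vimage_eq_inv_image)
    also have "emeasure lborel (inv T ` ball 0 (real i)) = emeasure lborel (ball (0::'a) (real i))"
      by (rule lborel_orth_eq[OF T']) simp
    finally show ?thesis using emeasure_lborel_ball_finite by (metis infinity_ennreal_def less_irrefl)
  qed
qed



section \<open>Existence of the invariant measure on spheres of subspaces\<close>

definition inv_meas :: "('a::euclidean_space) set \<Rightarrow> 'a measure \<Rightarrow> bool" where
  "inv_meas E \<sigma> \<longleftrightarrow> sets \<sigma> = sets (restrict_space borel (sphere 0 1 \<inter> E)) \<and>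
       emeasure \<sigma> (space \<sigma>) = 1 \<and>
       (\<forall>T. orthogonal_transformation T \<and> T ` E = E \<longrightarrow> distr \<sigma> \<sigma> T = \<sigma>)"

lemma haar_sphere_alt: "haar_sphere E = (THE \<sigma>. inv_meas E \<sigma>)"
  unfolding haar_sphere_def inv_meas_def ..

lemma sphere_subspace_nonempty:
  fixes E :: "'a::euclidean_space set"
  assumes E: "subspace E" and d: "dim E \<ge> 1"
  shows "\<exists>e. e \<in> sphere 0 1 \<inter> E"
proof -
  have "\<not> E \<subseteq> {0}" using d dim_eq_0[of E] by linarith
  then obtain x where x: "x \<in> E" "x \<noteq> 0" by blast
  then have "x /\<^sub>R norm x \<in> sphere 0 1 \<inter> E" using E by (simp add: subspace_scale)
  then show ?thesis by blast
qed

definition ball_meas :: "('a::euclidean_space) measure" where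
  "ball_meas = uniform_measure lborel (ball 0 1)"

definition e0 :: "('a::euclidean_space) set \<Rightarrow> 'a" where
  "e0 E = (SOME e. e \<in> sphere 0 1 \<inter> E)"

definition phi :: "('a::euclidean_space) set \<Rightarrow> 'a \<Rightarrow> 'a" where
  "phi E x = (if proj E x = 0 then e0 E else proj E x /\<^sub>R norm (proj E x))"

definition sig0 :: "('a::euclidean_space) set \<Rightarrow> 'a measure" where
  "sig0 E = distr ball_meas (restrict_space borel (sphere 0 1 \<inter> E)) (phi E)"

lemma e0_in: 
  fixes E :: "'a::euclidean_space set"
  assumes E: "subspace E" and d: "dim E \<ge> 1"
  shows "e0 E \<in> sphere 0 1 \<inter> E"
  unfolding e0_def using sphere_subspace_nonempty[OF assms] by (rule someI_ex)

lemma sets_ball_meas[simp, measurable_cong]: "sets ball_meas = sets borel"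
  by (simp add: ball_meas_def)

lemma space_ball_meas[simp]: "space ball_meas = UNIV"
  by (simp add: ball_meas_def)

lemma ball_meas_pos: "emeasure lborel (ball (0::'a::euclidean_space) 1) \<noteq> 0"
proof -
  have "measure lborel (ball (0::'a) 1) > 0" by (rule content_ball_pos) simp
  then have "emeasure lborel (ball (0::'a) 1) > 0"
    using emeasure_lborel_ball_finite[of "0::'a" 1] 
    by (simp add: emeasure_eq_ennreal_measure)
  then show ?thesis by simp
qed

lemma ball_meas_space: "emeasure (ball_meas :: 'a::euclidean_space measure) UNIV = 1"
proof -
  have "emeasure (ball_meas :: 'a measure) UNIV = emeasure lborel (ball (0::'a) 1) / emeasure lborel (ball (0::'a) 1)"
    unfolding ball_meas_def by (subst emeasure_uniform_measure) auto
  also have "\<dots> = 1"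
    using ball_meas_pos[where 'a='a] emeasure_lborel_ball_finite[of "0::'a" 1]
    by (simp add: divide_eq_1_ennreal)
  finally show ?thesis .
qed

lemma finite_measure_ball_meas: "finite_measure (ball_meas :: 'a::euclidean_space measure)"
  by (rule finite_measureI) (simp add: ball_meas_space)

lemma ball_meas_orth:
  fixes T :: "'a::euclidean_space \<Rightarrow> 'a"
  assumes T: "orthogonal_transformation T"
  shows "distr ball_meas borel T = ball_meas"
proof (rule measure_eqI)
  show "sets (distr ball_meas borel T) = sets ball_meas" by simp
  have Tm: "T \<in> borel_measurable borel"
    using linear_continuous_on[OF linear_conv_bounded_linear[THEN iffD1, OF orthogonal_transformation_linear[OF T]]]
    borel_measurable_continuous_onI by blast
  fix A assume "A \<in> sets (distr ball_meas borel T)"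
  then have A: "A \<in> sets borel" by simp
  have TB: "T -` ball 0 1 = ball 0 1"
    using T by (auto simp: orthogonal_transformation_norm)
  have "emeasure (distr ball_meas borel T) A = emeasure ball_meas (T -` A)"
    using A Tm by (simp add: emeasure_distr)
  also have "\<dots> = emeasure lborel (ball 0 1 \<inter> T -` A) / emeasure lborel (ball (0::'a) 1)"
    unfolding ball_meas_def using A Tm by (subst emeasure_uniform_measure) (auto simp: measurable_sets_borel)
  also have "ball 0 1 \<inter> T -` A = T -` (ball 0 1 \<inter> A)" using TB by auto
  also have "emeasure lborel (T -` (ball 0 1 \<inter> A)) = emeasure (distr lborel borel T) (ball 0 1 \<inter> A)"
    using A Tm by (simp add: emeasure_distr)
  also have "\<dots> = emeasure lborel (ball 0 1 \<inter> A)" by (simp add: lborel_orth_distr[OF T])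
  also have "emeasure lborel (ball 0 1 \<inter> A) / emeasure lborel (ball (0::'a) 1) = emeasure ball_meas A"
    unfolding ball_meas_def using A by (subst emeasure_uniform_measure) auto
  finally show "emeasure (distr ball_meas borel T) A = emeasure ball_meas A" .
qed

lemma phi_in:
  fixes E :: "'a::euclidean_space set"
  assumes E: "subspace E" and d: "dim E \<ge> 1"
  shows "phi E x \<in> sphere 0 1 \<inter> E"
  using e0_in[OF assms] proj_in[OF E, of x] E by (auto simp: phi_def subspace_scale)

lemma phi_meas:
  fixes E :: "'a::euclidean_space set"
  assumes E: "subspace E"
  shows "phi E \<in> borel_measurable borel"
proof -
  have [measurable]: "proj E \<in> borel_measurable borel" by (rule proj_borel[OF E])
  show ?thesis unfolding phi_def[abs_def] by measurable
qed

lemma phi_meas_restrict: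
  fixes E :: "'a::euclidean_space set"
  assumes E: "subspace E" and d: "dim E \<ge> 1"
  shows "phi E \<in> measurable ball_meas (restrict_space borel (sphere 0 1 \<inter> E))"
proof (rule measurable_restrict_space2)
  show "phi E \<in> space ball_meas \<rightarrow> sphere 0 1 \<inter> E" using phi_in[OF E d] by blast
  show "phi E \<in> borel_measurable ball_meas"
    using phi_meas[OF E] measurable_cong_sets[OF sets_ball_meas refl] by blast
qed

lemma sets_sig0: "sets (sig0 E) = sets (restrict_space borel (sphere 0 1 \<inter> E))"
  by (simp add: sig0_def)

lemma space_sig0: "space (sig0 E) = sphere 0 1 \<inter> E"
  by (simp add: sig0_def space_restrict_space)

lemma sig0_space:
  fixes E :: "'a::euclidean_space set"
  assumes E: "subspace E" and d: "dim E \<ge> 1"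
  shows "emeasure (sig0 E) (space (sig0 E)) = 1"
proof -
  have "emeasure (sig0 E) (space (sig0 E)) = emeasure ball_meas (phi E -` space (sig0 E) \<inter> space ball_meas)"
    unfolding sig0_def using phi_meas_restrict[OF E d]
    by (subst emeasure_distr) auto
  also have "phi E -` space (sig0 E) \<inter> space ball_meas = UNIV"
    using phi_in[OF E d] by (auto simp: space_sig0)
  finally show ?thesis by (simp add: ball_meas_space)
qed

lemma orth_trans_borel: 
  fixes T :: "'a::euclidean_space \<Rightarrow> 'a"
  assumes T: "orthogonal_transformation T"
  shows "T \<in> borel_measurable borel"
    using linear_continuous_on[OF linear_conv_bounded_linear[THEN iffD1, OF orthogonal_transformation_linear[OF T]]]
    borel_measurable_continuous_onI by blast

lemma orth_trans_maps_sphere: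
  fixes T :: "'a::euclidean_space \<Rightarrow> 'a"
  assumes T: "orthogonal_transformation T" and TE: "T ` E = E"
  shows "T \<in> sphere 0 1 \<inter> E \<rightarrow> sphere 0 1 \<inter> E"
  using TE T by (auto simp: orthogonal_transformation_norm)

lemma orth_trans_meas_sphere:
  fixes T :: "'a::euclidean_space \<Rightarrow> 'a"
  assumes T: "orthogonal_transformation T" and TE: "T ` E = E"
  shows "T \<in> measurable (restrict_space borel (sphere 0 1 \<inter> E)) (restrict_space borel (sphere 0 1 \<inter> E))"
  by (rule measurable_restrict_space3[OF orth_trans_borel[OF T] orth_trans_maps_sphere[OF T TE]])

lemma orth_comp_null:
  fixes E :: "'a::euclidean_space set"
  assumes E: "subspace E" and d: "dim E \<ge> 1"
  shows "orthogonal_comp E \<in> null_sets lborel"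
proof (rule negligible_borel_null)
  show "negligible (orthogonal_comp E)"
    by (rule negligible_lowdim) (use dim_orth_comp[OF E] d in simp)
  show "orthogonal_comp E \<in> sets borel"
    by (rule borel_closed) (simp add: closed_subspace subspace_orthogonal_comp)
qed

lemma sig0_inv:
  fixes E :: "'a::euclidean_space set"
  assumes E: "subspace E" and d: "dim E \<ge> 1"
  and T: "orthogonal_transformation T" and TE: "T ` E = E"
  shows "distr (sig0 E) (sig0 E) T = sig0 E"
proof -
  let ?R = "restrict_space borel (sphere 0 1 \<inter> E)"
  have Tm: "T \<in> measurable ?R ?R" by (rule orth_trans_meas_sphere[OF T TE])
  have Tb: "T \<in> borel_measurable borel" by (rule orth_trans_borel[OF T])
  have pm: "phi E \<in> measurable ball_meas ?R" by (rule phi_meas_restrict[OF E d])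
  have pmb: "phi E \<in> measurable borel ?R"
    using pm measurable_cong_sets[OF sets_ball_meas refl] by blast
  have "distr (sig0 E) (sig0 E) T = distr (distr ball_meas ?R (phi E)) ?R T"
    unfolding sig0_def by (rule distr_cong) (auto simp: sets_sig0[unfolded sig0_def])
  also have "\<dots> = distr ball_meas ?R (T \<circ> phi E)"
    by (rule distr_distr[OF Tm pm])
  also have "\<dots> = distr ball_meas ?R (phi E \<circ> T)"
  proof (rule distr_cong_AE)
    have "AE x in lborel. x \<notin> orthogonal_comp E"
      using orth_comp_null[OF E d] by (rule AE_not_in)
    then have "AE x in ball_meas. x \<notin> orthogonal_comp E"
      unfolding ball_meas_def by (intro AE_uniform_measureI) auto
    then show "AE x in ball_meas. (T \<circ> phi E) x = (phi E \<circ> T) x"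
    proof (rule AE_mp, intro AE_I2 impI)
      fix x assume "x \<notin> orthogonal_comp E"
      then have p0: "proj E x \<noteq> 0" using proj_zero_iff[OF E] by blast
      have "proj E (T x) = T (proj E x)" by (rule proj_commute_orth[OF E T TE])
      moreover have "T (proj E x) \<noteq> 0"
        using p0 T by (metis norm_eq_zero orthogonal_transformation_norm)
      ultimately show "(T \<circ> phi E) x = (phi E \<circ> T) x"
        using p0 T by (simp add: phi_def orthogonal_transformation_norm orthogonal_transformation_scaleR)
    qed
    show "T \<circ> phi E \<in> measurable ball_meas ?R" using Tm pm by measurable
    show "phi E \<circ> T \<in> measurable ball_meas ?R"
      using measurable_comp[OF Tb pmb] measurable_cong_sets[OF sets_ball_meas refl] by blast
  qed auto
  also have "\<dots> = distr (distr ball_meas borel T) ?R (phi E)"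
    by (rule distr_distr[symmetric, OF pmb]) (use Tb measurable_cong_sets[OF sets_ball_meas refl] in blast)
  also have "distr ball_meas borel T = ball_meas" by (rule ball_meas_orth[OF T])
  finally show ?thesis by (simp add: sig0_def)
qed

lemma sig0_inv_meas:
  fixes E :: "'a::euclidean_space set"
  assumes E: "subspace E" and d: "dim E \<ge> 1"
  shows "inv_meas E (sig0 E)"
  unfolding inv_meas_def using sets_sig0 sig0_space[OF E d] sig0_inv[OF E d] by blast



lemma inv_meas_sets: "inv_meas E \<tau> \<Longrightarrow> sets \<tau> = sets (restrict_space borel (sphere 0 1 \<inter> E))"
  by (simp add: inv_meas_def)

lemma inv_meas_space: "inv_meas E \<tau> \<Longrightarrow> space \<tau> = sphere 0 1 \<inter> E"
  using sets_eq_imp_space_eq[OF inv_meas_sets] by (simp add: space_restrict_space)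

lemma inv_meas_one: "inv_meas E \<tau> \<Longrightarrow> emeasure \<tau> (space \<tau>) = 1"
  by (simp add: inv_meas_def)

lemma inv_meas_measure_one: "inv_meas E \<tau> \<Longrightarrow> measure \<tau> (space \<tau>) = 1"
  using inv_meas_one by (simp add: measure_def)

lemma inv_meas_finite: "inv_meas E \<tau> \<Longrightarrow> finite_measure \<tau>"
  by (rule finite_measureI) (simp add: inv_meas_one)

lemma inv_meas_inv:
  "inv_meas E \<tau> \<Longrightarrow> orthogonal_transformation T \<Longrightarrow> T ` E = E \<Longrightarrow> distr \<tau> \<tau> T = \<tau>"
  by (simp add: inv_meas_def)

lemma inv_meas_borel:
  assumes "inv_meas E \<tau>" "f \<in> borel_measurable borel"
  shows "f \<in> borel_measurable \<tau>"
  using measurable_restrict_space1[OF assms(2)] measurable_cong_sets[OF inv_meas_sets[OF assms(1)] refl]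
  by blast

lemma inv_meas_cont:
  assumes "inv_meas E \<tau>" "continuous_on (sphere 0 1 \<inter> E) f"
  shows "f \<in> borel_measurable \<tau>"
  using borel_measurable_continuous_on_restrict[OF assms(2)] measurable_cong_sets[OF inv_meas_sets[OF assms(1)] refl]
  by blast

lemma compact_sph:
  fixes E :: "'a::euclidean_space set"
  assumes "subspace E" shows "compact (sphere 0 1 \<inter> E)"
  using assms by (intro compact_Int_closed) (auto simp: closed_subspace)

lemma cont_bounded_sph:
  fixes E :: "'a::euclidean_space set"
  assumes E: "subspace E" and f: "continuous_on (sphere 0 1 \<inter> E) f"
  obtains B where "\<And>z. z \<in> sphere 0 1 \<inter> E \<Longrightarrow> norm (f z :: real) \<le> B"
proof -
  have "compact (f ` (sphere 0 1 \<inter> E))" by (rule compact_continuous_image[OF f compact_sph[OF E]])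
  then have "bounded (f ` (sphere 0 1 \<inter> E))" by (rule compact_imp_bounded)
  then obtain B where "\<And>y. y \<in> f ` (sphere 0 1 \<inter> E) \<Longrightarrow> norm y \<le> B" by (meson bounded_iff)
  then show ?thesis using that by blast
qed

lemma inv_meas_integrable:
  fixes E :: "'a::euclidean_space set"
  assumes \<tau>: "inv_meas E \<tau>" and E: "subspace E" and f: "continuous_on (sphere 0 1 \<inter> E) f"
  shows "integrable \<tau> (f :: 'a \<Rightarrow> real)"
proof -
  interpret finite_measure \<tau> by (rule inv_meas_finite[OF \<tau>])
  obtain B where B: "\<And>z. z \<in> sphere 0 1 \<inter> E \<Longrightarrow> norm (f z) \<le> B" using cont_bounded_sph[OF E f] by blast
  show ?thesis
  proof (rule integrable_const_bound[where B=B])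
    show "AE x in \<tau>. norm (f x) \<le> B" using B inv_meas_space[OF \<tau>] by (intro AE_I2) auto
    show "f \<in> borel_measurable \<tau>" by (rule inv_meas_cont[OF \<tau> f])
  qed
qed

lemma inv_meas_int_bound:
  fixes E :: "'a::euclidean_space set"
  assumes \<tau>: "inv_meas E \<tau>" and E: "subspace E" and f: "continuous_on (sphere 0 1 \<inter> E) f"
    and B: "\<And>z. z \<in> sphere 0 1 \<inter> E \<Longrightarrow> \<bar>f z\<bar> \<le> (B::real)"
  shows "\<bar>integral\<^sup>L \<tau> f\<bar> \<le> B"
proof -
  interpret finite_measure \<tau> by (rule inv_meas_finite[OF \<tau>])
  have int: "integrable \<tau> f" by (rule inv_meas_integrable[OF \<tau> E f])
  have "\<bar>integral\<^sup>L \<tau> f\<bar> \<le> integral\<^sup>L \<tau> (\<lambda>x. \<bar>f x\<bar>)" by (rule integral_abs_bound)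
  also have "\<dots> \<le> integral\<^sup>L \<tau> (\<lambda>x. B)"
    using int B inv_meas_space[OF \<tau>] by (intro integral_mono) auto
  also have "\<dots> = B" using inv_meas_measure_one[OF \<tau>] by simp
  finally show ?thesis .
qed

definition refl_map :: "'a::euclidean_space \<Rightarrow> 'a \<Rightarrow> 'a" where
  "refl_map w x = x - (2 * (x \<bullet> w) / (w \<bullet> w)) *\<^sub>R w"

lemma refl_map_linear: "linear (refl_map w)"
  unfolding refl_map_def[abs_def]
  by (intro linearI) (auto simp: inner_add_left scaleR_add_left algebra_simps add_divide_distrib)

lemma refl_map_inner: "refl_map w x \<bullet> refl_map w y = x \<bullet> y"
proof (cases "w = 0")
  case True then show ?thesis by (simp add: refl_map_def)
next
  case False
  then have ww: "w \<bullet> w \<noteq> 0" by simp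
  show ?thesis unfolding refl_map_def
    using ww by (simp add: inner_diff_left inner_diff_right algebra_simps power2_eq_square field_simps inner_commute)
qed

lemma refl_map_orth: "orthogonal_transformation (refl_map w)"
  unfolding orthogonal_transformation_def using refl_map_linear refl_map_inner by blast

lemma refl_map_sym: "refl_map w x \<bullet> y = x \<bullet> refl_map w y"
  unfolding refl_map_def by (simp add: inner_diff_left inner_diff_right algebra_simps inner_commute)

lemma refl_map_invol: "refl_map w (refl_map w x) = x"
proof (cases "w = 0")
  case True then show ?thesis by (simp add: refl_map_def)
next
  case False
  then have ww: "w \<bullet> w \<noteq> 0" by simp
  show ?thesis unfolding refl_map_def
    using ww by (simp add: inner_diff_left algebra_simps field_simps)
qed

lemma refl_map_subspace:
  assumes E: "subspace E" and w: "w \<in> E"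
  shows "refl_map w ` E = E"
proof -
  have sub: "refl_map w x \<in> E" if "x \<in> E" for x
    unfolding refl_map_def using E w that by (simp add: subspace_diff subspace_scale)
  show ?thesis
  proof
    show "refl_map w ` E \<subseteq> E" using sub by blast
    show "E \<subseteq> refl_map w ` E"
    proof
      fix x assume "x \<in> E"
      then show "x \<in> refl_map w ` E" using sub refl_map_invol by (metis image_eqI)
    qed
  qed
qed

lemma refl_map_swap:
  fixes e e' :: "'a::euclidean_space"
  assumes "norm e = 1" "norm e' = 1" "e \<noteq> e'"
  shows "refl_map (e - e') e' = e"
proof -
  let ?w = "e - e'"
  have ee: "e \<bullet> e = 1" "e' \<bullet> e' = 1" using assms by (simp_all add: norm_eq_1)
  have ww: "?w \<bullet> ?w = 2 - 2 * (e \<bullet> e')" using ee by (simp add: inner_diff_left inner_diff_right inner_commute)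
  have nz: "?w \<bullet> ?w \<noteq> 0" using assms by simp
  have ew: "e' \<bullet> ?w = e \<bullet> e' - 1" using ee by (simp add: inner_diff_right inner_commute)
  have a: "2 - 2 * (e \<bullet> e') \<noteq> 0" using nz ww by simp
  have "2 * (e' \<bullet> ?w) / (?w \<bullet> ?w) = 2 * (e \<bullet> e' - 1) / (2 - 2 * (e \<bullet> e'))"
    unfolding ew ww ..
  also have "\<dots> = -1" using a by (simp add: field_simps)
  finally have "2 * (e' \<bullet> ?w) / (?w \<bullet> ?w) = -1" .
  then show ?thesis unfolding refl_map_def by simp
qed

lemma inv_meas_transitive:
  fixes E :: "'a::euclidean_space set"
  assumes \<tau>: "inv_meas E \<tau>" and E: "subspace E"
    and e: "e \<in> sphere 0 1 \<inter> E" and e': "e' \<in> sphere 0 1 \<inter> E"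
    and g: "(g :: real \<Rightarrow> real) \<in> borel_measurable borel"
  shows "(\<integral>z. g (z \<bullet> e') \<partial>\<tau>) = (\<integral>z. g (z \<bullet> e) \<partial>\<tau>)"
proof (cases "e = e'")
  case True then show ?thesis by simp
next
  case False
  define R where "R = refl_map (e - e')"
  have wE: "e - e' \<in> E" using e e' E by (simp add: subspace_diff)
  have R: "orthogonal_transformation R" "R ` E = E"
    unfolding R_def by (rule refl_map_orth, rule refl_map_subspace[OF E wE])
  have Rm: "R \<in> measurable \<tau> \<tau>"
    using orth_trans_meas_sphere[OF R] measurable_cong_sets[OF inv_meas_sets[OF \<tau>] inv_meas_sets[OF \<tau>]]
    by blast
  have gm: "(\<lambda>z. g (z \<bullet> e')) \<in> borel_measurable \<tau>"
    by (rule inv_meas_borel[OF \<tau>]) (use g in measurable)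
  have "(\<integral>z. g (z \<bullet> e') \<partial>\<tau>) = (\<integral>z. g (z \<bullet> e') \<partial>(distr \<tau> \<tau> R))"
    using inv_meas_inv[OF \<tau> R] by simp
  also have "\<dots> = (\<integral>z. g (R z \<bullet> e') \<partial>\<tau>)"
    using Rm gm by (rule integral_distr)
  also have "\<dots> = (\<integral>z. g (z \<bullet> e) \<partial>\<tau>)"
  proof -
    have "R z \<bullet> e' = z \<bullet> e" for z
      unfolding R_def using refl_map_sym[of "e - e'" z e'] refl_map_swap[of e e'] e e' False by simp
    then show ?thesis by simp
  qed
  finally show ?thesis .
qed



section \<open>Uniqueness of the invariant measure\<close>

lemma inv_meas_id_borel:
  assumes "inv_meas E \<tau>" shows "(\<lambda>x. x) \<in> borel_measurable \<tau>"
  by (rule inv_meas_borel[OF assms]) simp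

lemma inv_meas_exp_fubini:
  fixes E :: "'a::euclidean_space set"
  assumes t1: "inv_meas E \<tau>1" and t2: "inv_meas E \<tau>2" and E: "subspace E"
    and e: "e \<in> sphere 0 1 \<inter> E"
  shows "(\<integral>z. exp (r * (z \<bullet> e)) \<partial>\<tau>1) = (\<integral>z. exp (r * (z \<bullet> e)) \<partial>\<tau>2)"
proof -
  interpret f1: finite_measure \<tau>1 by (rule inv_meas_finite[OF t1])
  interpret f2: finite_measure \<tau>2 by (rule inv_meas_finite[OF t2])
  interpret pair_sigma_finite \<tau>1 \<tau>2 by unfold_locales
  interpret fp: finite_measure "\<tau>1 \<Otimes>\<^sub>M \<tau>2"
    by (rule finite_measure_pair_measure) unfold_locales
  have [measurable]: "(\<lambda>x. x) \<in> borel_measurable \<tau>1" "(\<lambda>x. x) \<in> borel_measurable \<tau>2"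
    using inv_meas_id_borel[OF t1] inv_meas_id_borel[OF t2] .
  have int: "integrable (\<tau>1 \<Otimes>\<^sub>M \<tau>2) (\<lambda>(z,w). exp (r * (z \<bullet> w)))"
  proof (rule fp.integrable_const_bound[where B="exp \<bar>r\<bar>"])
    show "(\<lambda>(z,w). exp (r * (z \<bullet> w))) \<in> borel_measurable (\<tau>1 \<Otimes>\<^sub>M \<tau>2)"
    proof -
      have "(\<lambda>p. exp (r * (fst p \<bullet> snd p))) \<in> borel_measurable (\<tau>1 \<Otimes>\<^sub>M \<tau>2)" by measurable
      then show ?thesis by (simp add: case_prod_beta')
    qed
    show "AE x in \<tau>1 \<Otimes>\<^sub>M \<tau>2. norm ((\<lambda>(z,w). exp (r * (z \<bullet> w))) x) \<le> exp \<bar>r\<bar>"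
    proof (rule AE_I2)
      fix x assume "x \<in> space (\<tau>1 \<Otimes>\<^sub>M \<tau>2)"
      then obtain z w where x: "x = (z, w)" "norm z = 1" "norm w = 1"
        using inv_meas_space[OF t1] inv_meas_space[OF t2] by (auto simp: space_pair_measure)
      have "\<bar>z \<bullet> w\<bar> \<le> 1" using Cauchy_Schwarz_ineq2[of z w] x by simp
      then have "r * (z \<bullet> w) \<le> \<bar>r\<bar>"
        by (metis abs_ge_self abs_mult mult.commute mult_left_le order_trans abs_ge_zero)
      then show "norm ((\<lambda>(z,w). exp (r * (z \<bullet> w))) x) \<le> exp \<bar>r\<bar>" using x by simp
    qed
  qed
  have fub: "(\<integral>w. (\<integral>z. exp (r * (z \<bullet> w)) \<partial>\<tau>1) \<partial>\<tau>2) = (\<integral>z. (\<integral>w. exp (r * (z \<bullet> w)) \<partial>\<tau>2) \<partial>\<tau>1)"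
    using Fubini_integral[OF int] .
  have gm: "(\<lambda>t. exp (r * t)) \<in> borel_measurable borel" by measurable
  have in1: "(\<integral>z. exp (r * (z \<bullet> w)) \<partial>\<tau>1) = (\<integral>z. exp (r * (z \<bullet> e)) \<partial>\<tau>1)" if "w \<in> space \<tau>2" for w
    using inv_meas_transitive[OF t1 E e, of w "\<lambda>t. exp (r * t)"] that inv_meas_space[OF t2] gm by simp
  have in2: "(\<integral>w. exp (r * (z \<bullet> w)) \<partial>\<tau>2) = (\<integral>w. exp (r * (w \<bullet> e)) \<partial>\<tau>2)" if "z \<in> space \<tau>1" for z
    using inv_meas_transitive[OF t2 E e, of z "\<lambda>t. exp (r * t)"] that inv_meas_space[OF t1] gm
    by (simp add: inner_commute)
  have "(\<integral>w. (\<integral>z. exp (r * (z \<bullet> w)) \<partial>\<tau>1) \<partial>\<tau>2) = (\<integral>w. (\<integral>z. exp (r * (z \<bullet> e)) \<partial>\<tau>1) \<partial>\<tau>2)"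
    using in1 by (rule Bochner_Integration.integral_cong[OF refl])
  also have "\<dots> = (\<integral>z. exp (r * (z \<bullet> e)) \<partial>\<tau>1)"
    using inv_meas_measure_one[OF t2] by simp
  finally have l: "(\<integral>w. (\<integral>z. exp (r * (z \<bullet> w)) \<partial>\<tau>1) \<partial>\<tau>2) = (\<integral>z. exp (r * (z \<bullet> e)) \<partial>\<tau>1)" .
  have "(\<integral>z. (\<integral>w. exp (r * (z \<bullet> w)) \<partial>\<tau>2) \<partial>\<tau>1) = (\<integral>z. (\<integral>w. exp (r * (w \<bullet> e)) \<partial>\<tau>2) \<partial>\<tau>1)"
    using in2 by (rule Bochner_Integration.integral_cong[OF refl])
  also have "\<dots> = (\<integral>w. exp (r * (w \<bullet> e)) \<partial>\<tau>2)"
    using inv_meas_measure_one[OF t1] by simp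
  finally have r: "(\<integral>z. (\<integral>w. exp (r * (z \<bullet> w)) \<partial>\<tau>2) \<partial>\<tau>1) = (\<integral>w. exp (r * (w \<bullet> e)) \<partial>\<tau>2)" .
  show ?thesis using fub l r by simp
qed

lemma inv_meas_exp_eq:
  fixes E :: "'a::euclidean_space set"
  assumes t1: "inv_meas E \<tau>1" and t2: "inv_meas E \<tau>2" and E: "subspace E"
  shows "(\<integral>z. exp (z \<bullet> a) \<partial>\<tau>1) = (\<integral>z. exp (z \<bullet> a) \<partial>\<tau>2)"
proof (cases "proj E a = 0")
  case True
  have "(\<integral>z. exp (z \<bullet> a) \<partial>\<tau>) = 1" if t: "inv_meas E \<tau>" for \<tau>
  proof -
    have "(\<integral>z. exp (z \<bullet> a) \<partial>\<tau>) = (\<integral>z. 1 \<partial>\<tau>)"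
    proof (rule Bochner_Integration.integral_cong[OF refl])
      fix z assume "z \<in> space \<tau>"
      then have "z \<in> E" using inv_meas_space[OF t] by auto
      then have "z \<bullet> a = z \<bullet> proj E a" using proj_inner'[OF E] by simp
      then show "exp (z \<bullet> a) = 1" using True by simp
    qed
    then show ?thesis using inv_meas_measure_one[OF t] by simp
  qed
  then show ?thesis using t1 t2 by simp
next
  case False
  define p where "p = proj E a"
  define e where "e = p /\<^sub>R norm p"
  have e: "e \<in> sphere 0 1 \<inter> E" using False proj_in[OF E, of a] E
    by (simp add: e_def p_def subspace_scale)
  have eq: "(\<integral>z. exp (z \<bullet> a) \<partial>\<tau>) = (\<integral>z. exp (norm p * (z \<bullet> e)) \<partial>\<tau>)" if t: "inv_meas E \<tau>" for \<tau>
  proof (rule Bochner_Integration.integral_cong[OF refl])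
    fix z assume "z \<in> space \<tau>"
    then have "z \<in> E" using inv_meas_space[OF t] by auto
    then have "z \<bullet> a = z \<bullet> p" using proj_inner'[OF E] by (simp add: p_def)
    also have "\<dots> = norm p * (z \<bullet> e)" using False by (simp add: e_def p_def)
    finally show "exp (z \<bullet> a) = exp (norm p * (z \<bullet> e))" by simp
  qed
  show ?thesis using eq[OF t1] eq[OF t2] inv_meas_exp_fubini[OF t1 t2 E e] by simp
qed

definition expsum :: "(real \<times> 'a::euclidean_space) list \<Rightarrow> 'a \<Rightarrow> real" where
  "expsum L z = sum_list (map (\<lambda>(c,a). c * exp (z \<bullet> a)) L)"

lemma expsum_Nil[simp]: "expsum [] z = 0" by (simp add: expsum_def)
lemma expsum_Cons[simp]: "expsum ((c,a) # L) z = c * exp (z \<bullet> a) + expsum L z"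
  by (simp add: expsum_def)
lemma expsum_append: "expsum (L1 @ L2) z = expsum L1 z + expsum L2 z"
  by (simp add: expsum_def)

definition mulL :: "(real \<times> 'a::euclidean_space) list \<Rightarrow> (real \<times> 'a) list \<Rightarrow> (real \<times> 'a) list" where
  "mulL L1 L2 = concat (map (\<lambda>(c,a). map (\<lambda>(d,b). (c * d, a + b)) L2) L1)"

lemma expsum_scale: "expsum (map (\<lambda>(d,b). (c * d, a + b)) L) z = c * exp (z \<bullet> a) * expsum L z"
  by (induction L) (auto simp: inner_add_right exp_add algebra_simps)

lemma expsum_mulL: "expsum (mulL L1 L2) z = expsum L1 z * expsum L2 z"
proof (induction L1)
  case Nil then show ?case by (simp add: mulL_def)
next
  case (Cons p L1)
  obtain c a where p: "p = (c, a)" by (cases p)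
  have m: "mulL (p # L1) L2 = map (\<lambda>(d,b). (c * d, a + b)) L2 @ mulL L1 L2"
    by (simp add: mulL_def p)
  have "expsum (mulL (p # L1) L2) z = expsum (map (\<lambda>(d,b). (c * d, a + b)) L2) z + expsum (mulL L1 L2) z"
    unfolding m by (rule expsum_append)
  also have "\<dots> = c * exp (z \<bullet> a) * expsum L2 z + expsum L1 z * expsum L2 z"
    by (simp only: expsum_scale Cons.IH)
  also have "\<dots> = expsum (p # L1) z * expsum L2 z" by (simp add: p algebra_simps)
  finally show ?case .
qed

lemma expsum_cont: "continuous_on S (expsum L)"
proof (induction L)
  case Nil then show ?case by (simp add: expsum_def[abs_def])
next
  case (Cons p L)
  obtain c a where p: "p = (c, a)" by (cases p)
  have "continuous_on S (\<lambda>z. c * exp (z \<bullet> a) + expsum L z)"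
    using Cons by (intro continuous_intros) (auto simp: o_def)
  then show ?case by (simp add: p)
qed

lemma inv_meas_expsum_eq:
  fixes E :: "'a::euclidean_space set"
  assumes t1: "inv_meas E \<tau>1" and t2: "inv_meas E \<tau>2" and E: "subspace E"
  shows "(\<integral>z. expsum L z \<partial>\<tau>1) = (\<integral>z. expsum L z \<partial>\<tau>2)"
proof (induction L)
  case Nil then show ?case by simp
next
  case (Cons p L)
  obtain c a where p: "p = (c, a)" by (cases p)
  have ce: "continuous_on (sphere 0 1 \<inter> E) (\<lambda>z. exp (z \<bullet> a))" by (intro continuous_intros)
  have i: "(\<integral>z. c * exp (z \<bullet> a) + expsum L z \<partial>\<tau>) = c * (\<integral>z. exp (z \<bullet> a) \<partial>\<tau>) + (\<integral>z. expsum L z \<partial>\<tau>)"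
    if t: "inv_meas E \<tau>" for \<tau>
  proof -
    have "(\<integral>z. c * exp (z \<bullet> a) + expsum L z \<partial>\<tau>) = (\<integral>z. c * exp (z \<bullet> a) \<partial>\<tau>) + (\<integral>z. expsum L z \<partial>\<tau>)"
      by (rule Bochner_Integration.integral_add) (auto intro!: inv_meas_integrable[OF t E] continuous_intros expsum_cont)
    then show ?thesis by simp
  qed
  show ?case using i[OF t1] i[OF t2] Cons inv_meas_exp_eq[OF t1 t2 E, of a] by (simp add: p)
qed

lemma inv_meas_cont_eq:
  fixes E :: "'a::euclidean_space set"
  assumes t1: "inv_meas E \<tau>1" and t2: "inv_meas E \<tau>2" and E: "subspace E"
    and f: "continuous_on (sphere 0 1 \<inter> E) (f :: 'a \<Rightarrow> real)"
  shows "(\<integral>z. f z \<partial>\<tau>1) = (\<integral>z. f z \<partial>\<tau>2)"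
proof -
  let ?S = "sphere 0 1 \<inter> E"
  let ?P = "\<lambda>g. \<exists>L. g = expsum L"
  have approx: "\<exists>g. ?P g \<and> (\<forall>x\<in>?S. \<bar>f x - g x\<bar> < e)" if "e > 0" for e
  proof (rule Stone_Weierstrass_HOL[where P="?P"])
    show "compact ?S" by (rule compact_sph[OF E])
    show "?P (\<lambda>x. c)" for c
      by (rule exI[of _ "[(c, 0)]"]) (simp add: fun_eq_iff)
    show "continuous_on ?S g" if "?P g" for g using that expsum_cont by blast
    show "?P (\<lambda>x. g x + h x)" if "?P g \<and> ?P h" for g h
    proof -
      from that obtain L1 L2 where "g = expsum L1" "h = expsum L2" by blast
      then show ?thesis by (intro exI[of _ "L1 @ L2"]) (simp add: fun_eq_iff expsum_append)
    qed
    show "?P (\<lambda>x. g x * h x)" if "?P g \<and> ?P h" for g h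
    proof -
      from that obtain L1 L2 where "g = expsum L1" "h = expsum L2" by blast
      then show ?thesis by (intro exI[of _ "mulL L1 L2"]) (simp add: fun_eq_iff expsum_mulL)
    qed
    show "\<exists>g. ?P g \<and> g x \<noteq> g y" if "x \<in> ?S \<and> y \<in> ?S \<and> x \<noteq> y" for x y
    proof (rule exI[of _ "expsum [(1, x - y)]"], intro conjI)
      show "?P (expsum [(1, x - y)])" by blast
      have "(x - y) \<bullet> (x - y) > 0" using that by simp
      then have "x \<bullet> (x - y) \<noteq> y \<bullet> (x - y)" by (simp add: inner_diff_left)
      then show "expsum [(1, x - y)] x \<noteq> expsum [(1, x - y)] y" by simp
    qed
  qed (use f that in auto)
  have close: "\<bar>(\<integral>z. f z \<partial>\<tau>) - (\<integral>z. g z \<partial>\<tau>)\<bar> \<le> e"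
    if t: "inv_meas E \<tau>" and g: "\<forall>x\<in>?S. \<bar>f x - g x\<bar> < e" and cg: "continuous_on ?S g" for \<tau> g e
  proof -
    have "(\<integral>z. f z \<partial>\<tau>) - (\<integral>z. g z \<partial>\<tau>) = (\<integral>z. f z - g z \<partial>\<tau>)"
      by (rule Bochner_Integration.integral_diff[symmetric]) (auto intro!: inv_meas_integrable[OF t E] f cg)
    also have "\<bar>\<dots>\<bar> \<le> e"
      by (rule inv_meas_int_bound[OF t E]) (use g in \<open>auto intro!: continuous_intros f cg less_imp_le\<close>)
    finally show ?thesis .
  qed
  have *: "\<bar>(\<integral>z. f z \<partial>\<tau>1) - (\<integral>z. f z \<partial>\<tau>2)\<bar> \<le> 2 * e" if "e > 0" for e
  proof -
    from approx[OF that] obtain g where g: "?P g" "\<forall>x\<in>?S. \<bar>f x - g x\<bar> < e" by blast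
    obtain L where L: "g = expsum L" using g(1) by blast
    have cg: "continuous_on ?S g" using L expsum_cont by blast
    have "(\<integral>z. g z \<partial>\<tau>1) = (\<integral>z. g z \<partial>\<tau>2)" using inv_meas_expsum_eq[OF t1 t2 E] L by simp
    then show ?thesis using close[OF t1 g(2) cg] close[OF t2 g(2) cg] by linarith
  qed
  have "\<bar>(\<integral>z. f z \<partial>\<tau>1) - (\<integral>z. f z \<partial>\<tau>2)\<bar> \<le> 0"
  proof (rule field_le_epsilon)
    fix e :: real assume "e > 0"
    then show "\<bar>(\<integral>z. f z \<partial>\<tau>1) - (\<integral>z. f z \<partial>\<tau>2)\<bar> \<le> 0 + e"
      using *[of "e/2"] by simp
  qed
  then show ?thesis by simp
qed



lemma sigma_sets_closed_restrict:
  fixes X :: "'a::metric_space set"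
  assumes X: "closed X"
  shows "sigma_sets X {C. closed C \<and> C \<subseteq> X} = sets (restrict_space borel X)"
proof -
  have XB: "X \<inter> space borel \<in> sets borel" using X by simp
  have rs: "A \<in> sets (restrict_space borel X) \<longleftrightarrow> A \<subseteq> X \<and> A \<in> sets borel" for A
    using sets_restrict_space_iff[OF XB] .
  show ?thesis
  proof
    show "sigma_sets X {C. closed C \<and> C \<subseteq> X} \<subseteq> sets (restrict_space borel X)"
    proof
      fix A assume "A \<in> sigma_sets X {C. closed C \<and> C \<subseteq> X}"
      then have "A \<subseteq> X \<and> A \<in> sets borel"
      proof induct
        case (Basic a) then show ?case by auto
      next
        case Empty then show ?case by simp
      next
        case (Compl a) then show ?case using X by auto
      next
        case (Union a)
        have h: "a i \<subseteq> X \<and> a i \<in> sets borel" for i using Union by blast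
        then have "range a \<subseteq> sets borel" by blast
        then have "(\<Union>i. a i) \<in> sets borel" by (rule sets.countable_nat_UN)
        moreover have "(\<Union>i. a i) \<subseteq> X" using h by blast
        ultimately show ?case by blast
      qed
      then show "A \<in> sets (restrict_space borel X)" using rs by blast
    qed
    show "sets (restrict_space borel X) \<subseteq> sigma_sets X {C. closed C \<and> C \<subseteq> X}"
    proof
      fix A assume "A \<in> sets (restrict_space borel X)"
      then have A: "A \<subseteq> X" "A \<in> sets borel" using rs by auto
      have "A \<in> sigma_sets UNIV (Collect closed)"
      proof -
        have "sets (borel :: 'a measure) = sigma_sets UNIV (Collect closed)"
          by (subst borel_eq_closed) (rule sets_measure_of, simp)
        then show ?thesis using A(2) by simp
      qed
      then have "A \<inter> X \<in> sigma_sets X {C. closed C \<and> C \<subseteq> X}"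
      proof induct
        case (Basic a) then show ?case using X by (intro sigma_sets.Basic) auto
      next
        case Empty then show ?case by (simp add: sigma_sets.Empty)
      next
        case (Compl a)
        have "(UNIV - a) \<inter> X = X - (a \<inter> X)" by auto
        then show ?case using Compl by (simp add: sigma_sets.Compl)
      next
        case (Union a)
        have "(\<Union>i. a i) \<inter> X = (\<Union>i. a i \<inter> X)" by auto
        moreover have "(\<Union>i. a i \<inter> X) \<in> sigma_sets X {C. closed C \<and> C \<subseteq> X}"
          using Union by (intro sigma_sets.Union) blast
        ultimately show ?case by simp
      qed
      then show "A \<in> sigma_sets X {C. closed C \<and> C \<subseteq> X}" using A(1) by (simp add: Int_absorb2)
    qed
  qed
qed

lemma closed_sph:
  fixes E :: "'a::euclidean_space set"
  assumes "subspace E" shows "closed (sphere 0 1 \<inter> E)"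
  using assms by (intro closed_Int) (auto simp: closed_subspace)

lemma inv_meas_closed_eq:
  fixes E :: "'a::euclidean_space set"
  assumes t1: "inv_meas E \<tau>1" and t2: "inv_meas E \<tau>2" and E: "subspace E"
    and C: "closed C" "C \<subseteq> sphere 0 1 \<inter> E"
  shows "measure \<tau>1 C = measure \<tau>2 C"
proof (cases "C = {}")
  case True then show ?thesis by simp
next
  case False
  let ?S = "sphere 0 1 \<inter> E"
  define f where "f j z = max 0 (1 - real j * infdist z C)" for j :: nat and z :: 'a
  have cf: "continuous_on ?S (f j)" for j
    unfolding f_def[abs_def] by (intro continuous_intros)
  have lim: "(\<lambda>j. f j z) \<longlonglongrightarrow> indicator C z" for z
  proof (cases "z \<in> C")
    case True then show ?thesis by (simp add: f_def)
  next
    case nC: False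
    have d: "infdist z C > 0" by (rule infdist_pos_not_in_closed[OF C(1) False nC])
    obtain N :: nat where N: "1 / infdist z C < real N" using reals_Archimedean2 by blast
    have "eventually (\<lambda>j. f j z = 0) sequentially"
    proof (rule eventually_sequentiallyI[of N])
      fix j assume "N \<le> j"
      then have "1 / infdist z C < real j" using N by linarith
      then have "1 < real j * infdist z C" using d by (simp add: field_simps)
      then show "f j z = 0" by (simp add: f_def)
    qed
    then have "(\<lambda>j. f j z) \<longlonglongrightarrow> 0" by (rule tendsto_eventually)
    then show ?thesis using nC by simp
  qed
  have conv: "(\<lambda>j. \<integral>z. f j z \<partial>\<tau>) \<longlonglongrightarrow> measure \<tau> C" if t: "inv_meas E \<tau>" for \<tau>
  proof -
    interpret finite_measure \<tau> by (rule inv_meas_finite[OF t])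
    have Cs: "C \<in> sets \<tau>"
      using inv_meas_sets[OF t] C sets_restrict_space_iff[of "?S" borel C] closed_sph[OF E] by auto
    have "(\<lambda>j. \<integral>z. f j z \<partial>\<tau>) \<longlonglongrightarrow> (\<integral>z. indicator C z \<partial>\<tau>)"
    proof (rule integral_dominated_convergence[where w="\<lambda>_. 1"])
      show "indicator C \<in> borel_measurable \<tau>" using Cs by simp
      show "f j \<in> borel_measurable \<tau>" for j by (rule inv_meas_cont[OF t cf])
      show "integrable \<tau> (\<lambda>_. 1::real)" by simp
      show "AE x in \<tau>. (\<lambda>j. f j x) \<longlonglongrightarrow> indicator C x" using lim by simp
      show "AE x in \<tau>. norm (f j x) \<le> 1" for j
        by (intro AE_I2) (simp add: f_def infdist_nonneg)
    qed
    also have "(\<integral>z. indicator C z \<partial>\<tau>) = measure \<tau> C"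
      using Cs sets.sets_into_space[OF Cs] by (simp add: Int_absorb2)
    finally show ?thesis .
  qed
  have eqi: "(\<integral>z. f j z \<partial>\<tau>1) = (\<integral>z. f j z \<partial>\<tau>2)" for j
    by (rule inv_meas_cont_eq[OF t1 t2 E cf])
  show ?thesis using LIMSEQ_unique[OF conv[OF t1]] conv[OF t2] eqi by simp
qed

lemma inv_meas_unique:
  fixes E :: "'a::euclidean_space set"
  assumes t1: "inv_meas E \<tau>1" and t2: "inv_meas E \<tau>2" and E: "subspace E"
  shows "\<tau>1 = \<tau>2"
proof -
  let ?S = "sphere 0 1 \<inter> E"
  let ?G = "{C. closed C \<and> C \<subseteq> ?S}"
  have sg: "sets \<tau> = sigma_sets ?S ?G" if t: "inv_meas E \<tau>" for \<tau>
    using inv_meas_sets[OF t] sigma_sets_closed_restrict[OF closed_sph[OF E]] by simp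
  interpret f1: finite_measure \<tau>1 by (rule inv_meas_finite[OF t1])
  interpret f2: finite_measure \<tau>2 by (rule inv_meas_finite[OF t2])
  show ?thesis
  proof (rule measure_eqI_generator_eq[where E="?G" and \<Omega>="?S" and A="\<lambda>_. ?S"])
    show "Int_stable ?G" by (auto simp: Int_stable_def)
    show "?G \<subseteq> Pow ?S" by auto
    show "emeasure \<tau>1 X = emeasure \<tau>2 X" if "X \<in> ?G" for X
    proof -
      have X: "closed X" "X \<subseteq> ?S" using that by auto
      have "X \<in> sets \<tau>1" "X \<in> sets \<tau>2" using sg[OF t1] sg[OF t2] that by auto
      then show ?thesis
        using inv_meas_closed_eq[OF t1 t2 E X] by (simp add: f1.emeasure_eq_measure f2.emeasure_eq_measure)
    qed
    show "sets \<tau>1 = sigma_sets ?S ?G" by (rule sg[OF t1])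
    show "sets \<tau>2 = sigma_sets ?S ?G" by (rule sg[OF t2])
    show "range (\<lambda>_. ?S) \<subseteq> ?G" using closed_sph[OF E] by auto
    show "(\<Union>i::nat. ?S) = ?S" by simp
    show "emeasure \<tau>1 ?S \<noteq> \<infinity>" for i :: nat by simp
  qed
qed

lemma haar_sphere_sig0:
  fixes E :: "'a::euclidean_space set"
  assumes E: "subspace E" and d: "dim E \<ge> 1"
  shows "haar_sphere E = sig0 E"
  unfolding haar_sphere_alt
  using sig0_inv_meas[OF E d] inv_meas_unique[OF _ sig0_inv_meas[OF E d] E] by (rule the_equality)

lemma haar_inv_meas:
  fixes E :: "'a::euclidean_space set"
  assumes E: "subspace E" and d: "dim E \<ge> 1"
  shows "inv_meas E (haar_sphere E)"
  using haar_sphere_sig0[OF E d] sig0_inv_meas[OF E d] by simp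

lemma haar_unique:
  fixes E :: "'a::euclidean_space set"
  assumes E: "subspace E" and d: "dim E \<ge> 1" and t: "inv_meas E \<tau>"
  shows "haar_sphere E = \<tau>"
  using inv_meas_unique[OF haar_inv_meas[OF E d] t E] .



section \<open>Moments of the invariant measure\<close>

definition cmom :: "('a::euclidean_space) set \<Rightarrow> nat \<Rightarrow> real" where
  "cmom E j = (\<integral>z. (z \<bullet> e0 E) ^ j \<partial>haar_sphere E)"

lemma pow_borel: "(\<lambda>t::real. t ^ j) \<in> borel_measurable borel" by measurable

lemma cmom_any:
  fixes E :: "'a::euclidean_space set"
  assumes E: "subspace E" and d: "dim E \<ge> 1" and e: "e \<in> sphere 0 1 \<inter> E"
  shows "(\<integral>z. (z \<bullet> e) ^ j \<partial>haar_sphere E) = cmom E j"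
  unfolding cmom_def
  using inv_meas_transitive[OF haar_inv_meas[OF E d] E e0_in[OF E d] e pow_borel] by simp

lemma moment_formula:
  fixes E :: "'a::euclidean_space set"
  assumes E: "subspace E" and d: "dim E \<ge> 1"
  shows "(\<integral>z. (z \<bullet> a) ^ j \<partial>haar_sphere E) = cmom E j * norm (proj E a) ^ j"
proof -
  have t: "inv_meas E (haar_sphere E)" by (rule haar_inv_meas[OF E d])
  show ?thesis
  proof (cases "proj E a = 0")
    case True
    have "(\<integral>z. (z \<bullet> a) ^ j \<partial>haar_sphere E) = (\<integral>z. (z \<bullet> e0 E) ^ j * 0 ^ j \<partial>haar_sphere E)"
    proof (rule Bochner_Integration.integral_cong[OF refl])
      fix z assume "z \<in> space (haar_sphere E)"
      then have "z \<in> E" using inv_meas_space[OF t] by auto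
      then have "z \<bullet> a = z \<bullet> proj E a" using proj_inner'[OF E] by simp
      then show "(z \<bullet> a) ^ j = (z \<bullet> e0 E) ^ j * 0 ^ j" using True by (cases j) simp_all
    qed
    also have "\<dots> = cmom E j * 0 ^ j" by (simp add: cmom_def)
    finally show ?thesis using True by simp
  next
    case False
    define p where "p = proj E a"
    define e where "e = p /\<^sub>R norm p"
    have e: "e \<in> sphere 0 1 \<inter> E" using False proj_in[OF E, of a] E
      by (simp add: e_def p_def subspace_scale)
    have "(\<integral>z. (z \<bullet> a) ^ j \<partial>haar_sphere E) = (\<integral>z. norm p ^ j * (z \<bullet> e) ^ j \<partial>haar_sphere E)"
    proof (rule Bochner_Integration.integral_cong[OF refl])
      fix z assume "z \<in> space (haar_sphere E)"
      then have "z \<in> E" using inv_meas_space[OF t] by auto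
      then have "z \<bullet> a = z \<bullet> p" using proj_inner'[OF E] by (simp add: p_def)
      also have "\<dots> = norm p * (z \<bullet> e)" using False by (simp add: e_def p_def)
      finally show "(z \<bullet> a) ^ j = norm p ^ j * (z \<bullet> e) ^ j" by (simp add: power_mult_distrib)
    qed
    also have "\<dots> = norm p ^ j * cmom E j" using cmom_any[OF E d e] by simp
    finally show ?thesis by (simp add: p_def)
  qed
qed

lemma cmom_odd:
  fixes E :: "'a::euclidean_space set"
  assumes E: "subspace E" and d: "dim E \<ge> 1" and j: "odd j"
  shows "cmom E j = 0"
proof -
  have t: "inv_meas E (haar_sphere E)" by (rule haar_inv_meas[OF E d])
  let ?\<sigma> = "haar_sphere E"
  have N: "orthogonal_transformation uminus" "uminus ` E = E"
    using orthogonal_transformation_neg[of "\<lambda>x. x"] E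
     apply (simp add: o_def)
    using E by (auto simp: image_iff subspace_neg intro!: bexI[where x="- _"])
  have Nm: "uminus \<in> measurable ?\<sigma> ?\<sigma>"
    using orth_trans_meas_sphere[OF N] measurable_cong_sets[OF inv_meas_sets[OF t] inv_meas_sets[OF t]]
    by blast
  have gm: "(\<lambda>z. (z \<bullet> e0 E) ^ j) \<in> borel_measurable ?\<sigma>"
    by (rule inv_meas_borel[OF t]) measurable
  have "cmom E j = (\<integral>z. (z \<bullet> e0 E) ^ j \<partial>(distr ?\<sigma> ?\<sigma> uminus))"
    using inv_meas_inv[OF t N] by (simp add: cmom_def)
  also have "\<dots> = (\<integral>z. ((- z) \<bullet> e0 E) ^ j \<partial>?\<sigma>)"
    using Nm gm by (rule integral_distr)
  also have "\<dots> = (\<integral>z. - ((z \<bullet> e0 E) ^ j) \<partial>?\<sigma>)"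
    using j by (simp add: power_minus_odd)
  also have "\<dots> = - cmom E j" by (simp add: cmom_def)
  finally show ?thesis by simp
qed

lemma cmom_even_pos:
  fixes E :: "'a::euclidean_space set"
  assumes E: "subspace E" and d: "dim E \<ge> 1"
  shows "cmom E (2 * k) > 0"
proof (cases "k = 0")
  case True
  have t: "inv_meas E (haar_sphere E)" by (rule haar_inv_meas[OF E d])
  show ?thesis using True inv_meas_measure_one[OF t] by (simp add: cmom_def)
next
  case False
  have t: "inv_meas E (haar_sphere E)" by (rule haar_inv_meas[OF E d])
  let ?\<sigma> = "haar_sphere E"
  have nn: "cmom E (2 * k) \<ge> 0" unfolding cmom_def
    by (intro Bochner_Integration.integral_nonneg) (simp add: zero_le_even_power)
  have "cmom E (2 * k) \<noteq> 0"
  proof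
    assume c0: "cmom E (2 * k) = 0"
    have ae: "AE z in ?\<sigma>. z \<bullet> e = 0" if e: "e \<in> sphere 0 1 \<inter> E" for e
    proof -
      have int: "integrable ?\<sigma> (\<lambda>z. (z \<bullet> e) ^ (2 * k))"
        by (rule inv_meas_integrable[OF t E]) (intro continuous_intros)
      have "(\<integral>z. (z \<bullet> e) ^ (2 * k) \<partial>?\<sigma>) = 0" using cmom_any[OF E d e] c0 by simp
      then have "AE z in ?\<sigma>. (z \<bullet> e) ^ (2 * k) = 0"
        using integral_nonneg_eq_0_iff_AE[OF int] by (simp add: zero_le_even_power)
      then show ?thesis by eventually_elim (use False in simp)
    qed
    obtain B where B: "B \<subseteq> E" "pairwise orthogonal B" "\<And>x. x \<in> B \<Longrightarrow> norm x = 1"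
        "independent B" "card B = dim E" "span B = E"
      using orthonormal_basis_subspace[OF E] by metis
    have fB: "finite B" using B(4) by (rule finiteI_independent)
    have "AE z in ?\<sigma>. \<forall>b\<in>B. z \<bullet> b = 0"
      using fB by (rule AE_finite_allI) (use ae B in auto)
    then have "AE z in ?\<sigma>. False"
    proof (rule AE_mp, intro AE_I2 impI)
      fix z assume z: "z \<in> space ?\<sigma>" and zb: "\<forall>b\<in>B. z \<bullet> b = 0"
      have zE: "z \<in> span B" "norm z = 1" using z inv_meas_space[OF t] B(6) by auto
      have "orthogonal z z"
        by (rule orthogonal_to_span[OF zE(1)]) (use zb in \<open>simp add: orthogonal_def\<close>)
      then show False using zE(2) by (simp add: orthogonal_self)
    qed
    then have "emeasure ?\<sigma> (space ?\<sigma>) = 0"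
      using ae_filter_eq_bot_iff eventually_False by blast
    then show False using inv_meas_one[OF t] by simp
  qed
  then show ?thesis using nn by simp
qed

lemma haar_transport:
  fixes E F :: "'a::euclidean_space set"
  assumes E: "subspace E" and d: "dim E \<ge> 1"
    and U: "orthogonal_transformation U" and UE: "U ` E = F"
  shows "haar_sphere F = distr (haar_sphere E) (restrict_space borel (sphere 0 1 \<inter> F)) U"
proof -
  let ?\<sigma> = "haar_sphere E"
  let ?RF = "restrict_space borel (sphere 0 1 \<inter> F)"
  let ?\<rho> = "distr ?\<sigma> ?RF U"
  have t: "inv_meas E ?\<sigma>" by (rule haar_inv_meas[OF E d])
  have F: "subspace F" using UE E orthogonal_transformation_linear[OF U] linear_subspace_image by blast
  have dF: "dim F = dim E"
  proof -
    have "inj_on U (span E)" using orthogonal_transformation_inj[OF U] by (metis inj_on_subset subset_UNIV)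
    then show ?thesis using UE dim_image_eq[OF orthogonal_transformation_linear[OF U]] by metis
  qed
  have Umaps: "U \<in> sphere 0 1 \<inter> E \<rightarrow> sphere 0 1 \<inter> F"
    using UE U by (auto simp: orthogonal_transformation_norm)
  have Um: "U \<in> measurable ?\<sigma> ?RF"
    using measurable_restrict_space3[OF orth_trans_borel[OF U] Umaps]
      measurable_cong_sets[OF inv_meas_sets[OF t] refl] by blast
  have "inv_meas F ?\<rho>"
    unfolding inv_meas_def
  proof (intro conjI allI impI)
    show "sets ?\<rho> = sets ?RF" by simp
    have sp: "space ?\<rho> \<in> sets ?RF" using sets.top[of ?\<rho>] by simp
    have "emeasure ?\<rho> (space ?\<rho>) = emeasure ?\<sigma> (U -` space ?\<rho> \<inter> space ?\<sigma>)"
      by (rule emeasure_distr[OF Um sp])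
    also have "U -` space ?\<rho> \<inter> space ?\<sigma> = space ?\<sigma>"
      using Umaps inv_meas_space[OF t] by (auto simp: space_restrict_space)
    finally show "emeasure ?\<rho> (space ?\<rho>) = 1" using inv_meas_one[OF t] by simp
    fix T assume T: "orthogonal_transformation T \<and> T ` F = F"
    define V where "V = inv U \<circ> T \<circ> U"
    have iU: "orthogonal_transformation (inv U)" by (rule orthogonal_transformation_inv[OF U])
    have injU: "inj U" by (rule orthogonal_transformation_inj[OF U])
    have V: "orthogonal_transformation V" "V ` E = E"
    proof -
      show "orthogonal_transformation V" unfolding V_def
        using orthogonal_transformation_compose[OF iU orthogonal_transformation_compose[OF T[THEN conjunct1] U]]
        by (simp add: o_def comp_def)
      have "V ` E = inv U ` T ` U ` E" by (simp add: V_def image_comp)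
      also have "\<dots> = inv U ` F" using UE T by simp
      also have "\<dots> = E" using UE injU by (auto simp: image_comp)
      finally show "V ` E = E" .
    qed
    have UV: "U \<circ> V = T \<circ> U" unfolding V_def
      using orthogonal_transformation_surj[OF U] by (auto simp: fun_eq_iff surj_f_inv_f)
    have Tm: "T \<in> measurable ?RF ?RF"
      using orth_trans_meas_sphere[OF T[THEN conjunct1] T[THEN conjunct2]] .
    have Vm: "V \<in> measurable ?\<sigma> ?\<sigma>"
      using orth_trans_meas_sphere[OF V] measurable_cong_sets[OF inv_meas_sets[OF t] inv_meas_sets[OF t]]
      by blast
    have "distr ?\<rho> ?\<rho> T = distr ?\<rho> ?RF T" by (rule distr_cong) auto
    also have "\<dots> = distr ?\<sigma> ?RF (T \<circ> U)" by (rule distr_distr[OF Tm Um])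
    also have "\<dots> = distr ?\<sigma> ?RF (U \<circ> V)" by (simp add: UV)
    also have "\<dots> = distr (distr ?\<sigma> ?\<sigma> V) ?RF U" by (rule distr_distr[symmetric, OF Um Vm])
    also have "distr ?\<sigma> ?\<sigma> V = ?\<sigma>" by (rule inv_meas_inv[OF t V])
    finally show "distr ?\<rho> ?\<rho> T = ?\<rho>" .
  qed
  then show ?thesis by (rule haar_unique[OF F, unfolded dF, OF d])
qed

lemma cmom_dim:
  fixes E F :: "'a::euclidean_space set"
  assumes E: "E \<in> grass m" and F: "F \<in> grass m" and m: "m \<ge> 1"
  shows "cmom E j = cmom F j"
proof -
  have sE: "subspace E" "dim E = m" and sF: "subspace F" "dim F = m" using E F by (auto simp: grass_def)
  obtain U where U: "orthogonal_transformation U" "U ` E = F"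
    using orth_map_subspaces[OF sE(1) sF(1)] sE sF by metis
  have dE: "dim E \<ge> 1" using sE m by simp
  have dF: "dim F \<ge> 1" using sF m by simp
  let ?\<sigma> = "haar_sphere E"
  let ?RF = "restrict_space borel (sphere 0 1 \<inter> F)"
  have t: "inv_meas E ?\<sigma>" by (rule haar_inv_meas[OF sE(1) dE])
  have hF: "haar_sphere F = distr ?\<sigma> ?RF U" by (rule haar_transport[OF sE(1) dE U])
  have Umaps: "U \<in> sphere 0 1 \<inter> E \<rightarrow> sphere 0 1 \<inter> F"
    using U by (auto simp: orthogonal_transformation_norm)
  have Um: "U \<in> measurable ?\<sigma> ?RF"
    using measurable_restrict_space3[OF orth_trans_borel[OF U(1)] Umaps]
      measurable_cong_sets[OF inv_meas_sets[OF t] refl] by blast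
  let ?e = "e0 E"
  have e: "?e \<in> sphere 0 1 \<inter> E" by (rule e0_in[OF sE(1) dE])
  have Ue: "U ?e \<in> sphere 0 1 \<inter> F" using Umaps e by blast
  have gm: "(\<lambda>z. (z \<bullet> U ?e) ^ j) \<in> borel_measurable ?RF"
    by (rule measurable_restrict_space1) measurable
  have "cmom F j = (\<integral>z. (z \<bullet> U ?e) ^ j \<partial>haar_sphere F)" by (rule cmom_any[OF sF(1) dF Ue, symmetric])
  also have "\<dots> = (\<integral>z. (U z \<bullet> U ?e) ^ j \<partial>?\<sigma>)" unfolding hF using Um gm by (rule integral_distr)
  also have "\<dots> = (\<integral>z. (z \<bullet> ?e) ^ j \<partial>?\<sigma>)" using U(1) by (simp add: orth_trans_inner)
  also have "\<dots> = cmom E j" by (simp add: cmom_def)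
  finally show ?thesis by simp
qed




section \<open>The Grassmannian metric\<close>

lemma grass_subspace: "E \<in> grass m \<Longrightarrow> subspace E" by (simp add: grass_def)
lemma grass_dim: "E \<in> grass m \<Longrightarrow> dim E = m" by (simp add: grass_def)

lemma cball_sub_nonempty: "subspace E \<Longrightarrow> (0::'a::euclidean_space) \<in> cball 0 1 \<inter> E"
  by (simp add: subspace_0)

lemma closed_cball_sub: "subspace (E::'a::euclidean_space set) \<Longrightarrow> closed (cball 0 1 \<inter> E)"
  by (intro closed_Int) (auto simp: closed_subspace)

lemma infdist_cball_le1:
  fixes E F :: "'a::euclidean_space set"
  assumes F: "subspace F" and x: "x \<in> cball 0 1"
  shows "infdist x (cball 0 1 \<inter> F) \<le> 1"
proof -
  have "infdist x (cball 0 1 \<inter> F) \<le> dist x 0" by (rule infdist_le[OF cball_sub_nonempty[OF F]])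
  then show ?thesis using x by simp
qed

lemma gdist_ge1:
  fixes E F :: "'a::euclidean_space set"
  assumes E: "subspace E" and F: "subspace F" and x: "x \<in> cball 0 1 \<inter> E"
  shows "infdist x (cball 0 1 \<inter> F) \<le> gdist E F"
proof -
  have "infdist x (cball 0 1 \<inter> F) \<le> (SUP x\<in>cball 0 1 \<inter> E. infdist x (cball 0 1 \<inter> F))"
    by (rule cSUP_upper[OF x]) (use infdist_cball_le1[OF F] in \<open>auto intro!: bdd_aboveI[where M=1]\<close>)
  then show ?thesis unfolding gdist_def by simp
qed

lemma gdist_ge2:
  fixes E F :: "'a::euclidean_space set"
  assumes E: "subspace E" and F: "subspace F" and y: "y \<in> cball 0 1 \<inter> F"
  shows "infdist y (cball 0 1 \<inter> E) \<le> gdist E F"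
proof -
  have "infdist y (cball 0 1 \<inter> E) \<le> (SUP y\<in>cball 0 1 \<inter> F. infdist y (cball 0 1 \<inter> E))"
    by (rule cSUP_upper[OF y]) (use infdist_cball_le1[OF E] in \<open>auto intro!: bdd_aboveI[where M=1]\<close>)
  then show ?thesis unfolding gdist_def by simp
qed

lemma gdist_le:
  fixes E F :: "'a::euclidean_space set"
  assumes E: "subspace E" and F: "subspace F"
    and h1: "\<And>x. x \<in> cball 0 1 \<inter> E \<Longrightarrow> infdist x (cball 0 1 \<inter> F) \<le> s"
    and h2: "\<And>y. y \<in> cball 0 1 \<inter> F \<Longrightarrow> infdist y (cball 0 1 \<inter> E) \<le> s"
  shows "gdist E F \<le> s"
proof -
  have ne: "cball 0 1 \<inter> E \<noteq> {}" "cball 0 1 \<inter> F \<noteq> {}"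
    using cball_sub_nonempty[OF E] cball_sub_nonempty[OF F] by blast+
  have 1: "(SUP x\<in>cball 0 1 \<inter> E. infdist x (cball 0 1 \<inter> F)) \<le> s"
    by (rule cSUP_least[OF ne(1)]) (rule h1)
  have 2: "(SUP y\<in>cball 0 1 \<inter> F. infdist y (cball 0 1 \<inter> E)) \<le> s"
    by (rule cSUP_least[OF ne(2)]) (rule h2)
  show ?thesis unfolding gdist_def using 1 2 by simp
qed

lemma norm_proj_le_gap:
  fixes E F :: "'a::euclidean_space set"
  assumes E: "subspace E" and F: "subspace F"
    and h: "\<And>x. x \<in> cball 0 1 \<inter> E \<Longrightarrow> infdist x (cball 0 1 \<inter> F) \<le> g"
  shows "norm (proj E a) \<le> norm (proj F a) + norm a * g"
proof (cases "proj E a = 0")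
  case True
  have "0 \<le> g" using h[OF cball_sub_nonempty[OF E]] infdist_nonneg[of 0] by (meson order_trans)
  then show ?thesis using True by simp
next
  case False
  define p where "p = proj E a"
  define x where "x = p /\<^sub>R norm p"
  have xE: "x \<in> cball 0 1 \<inter> E" using False proj_in[OF E, of a] E
    by (simp add: x_def p_def subspace_scale)
  obtain y where y: "y \<in> cball 0 1 \<inter> F" "infdist x (cball 0 1 \<inter> F) = dist x y"
    using infdist_attains_inf[OF closed_cball_sub[OF F]] cball_sub_nonempty[OF F] by blast
  have "norm p = x \<bullet> p" using False by (simp add: x_def p_def power2_norm_eq_inner[symmetric] power2_eq_square)
  also have "\<dots> = x \<bullet> a" using proj_inner'[OF E] xE by (simp add: p_def)
  also have "\<dots> = y \<bullet> a + (x - y) \<bullet> a" by (simp add: inner_diff_left)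
  also have "y \<bullet> a = y \<bullet> proj F a" using proj_inner'[OF F] y(1) by simp
  also have "\<dots> \<le> norm y * norm (proj F a)" by (rule Cauchy_Schwarz_ineq2[THEN abs_le_D1])
  also have "\<dots> \<le> norm (proj F a)" using y(1) by (simp add: mult_left_le_one_le)
  also have "(x - y) \<bullet> a \<le> norm (x - y) * norm a" by (rule Cauchy_Schwarz_ineq2[THEN abs_le_D1])
  also have "norm (x - y) \<le> g" using h[OF xE] y(2) by (simp add: dist_norm)
  finally show ?thesis unfolding p_def by (simp add: mult_right_mono mult.commute)
qed

lemma norm_proj_gdist:
  fixes E F :: "'a::euclidean_space set"
  assumes E: "subspace E" and F: "subspace F"
  shows "\<bar>norm (proj E a) - norm (proj F a)\<bar> \<le> norm a * gdist E F"
  using norm_proj_le_gap[OF E F gdist_ge1[OF E F], of a] norm_proj_le_gap[OF F E gdist_ge2[OF E F], of a]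
  by simp

lemma sets_grass_borel: "sets (grass_borel m) = sigma_sets (grass m) {U. grass_open m U}"
  unfolding grass_borel_def by (rule sets_measure_of) (auto simp: grass_open_def)

lemma space_grass_borel: "space (grass_borel m) = grass m"
  unfolding grass_borel_def by (rule space_measure_of) (auto simp: grass_open_def)

lemma grass_open_sets: "grass_open m U \<Longrightarrow> U \<in> sets (grass_borel m)"
  by (simp add: sets_grass_borel)

lemma grass_borel_measurableI:
  assumes cont: "\<And>E e. E \<in> grass m \<Longrightarrow> e > 0 \<Longrightarrow> \<exists>d>0. \<forall>F\<in>grass m. gdist E F < d \<longrightarrow> \<bar>f F - f E\<bar> < e"
  shows "(f :: 'a::euclidean_space set \<Rightarrow> real) \<in> borel_measurable (grass_borel m)"
proof (rule borel_measurableI)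
  fix S :: "real set" assume S: "open S"
  have "grass_open m (f -` S \<inter> grass m)"
    unfolding grass_open_def
  proof (intro conjI ballI)
    show "f -` S \<inter> grass m \<subseteq> grass m" by blast
    fix E assume E: "E \<in> f -` S \<inter> grass m"
    then obtain e where e: "e > 0" "ball (f E) e \<subseteq> S" using S open_contains_ball by blast
    obtain d where d: "d > 0" "\<forall>F\<in>grass m. gdist E F < d \<longrightarrow> \<bar>f F - f E\<bar> < e"
      using cont[of E e] E e by blast
    show "\<exists>e>0. \<forall>F\<in>grass m. gdist E F < e \<longrightarrow> F \<in> f -` S \<inter> grass m"
    proof (intro exI conjI ballI impI)
      fix F assume "F \<in> grass m" "gdist E F < d"
      then have "\<bar>f F - f E\<bar> < e" using d by blast
      then have "f F \<in> ball (f E) e" unfolding mem_ball dist_real_def by (metis abs_minus_commute)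
      then show "F \<in> f -` S \<inter> grass m" using e \<open>F \<in> grass m\<close> by blast
    qed (rule d(1))
  qed
  then show "f -` S \<inter> space (grass_borel m) \<in> sets (grass_borel m)"
    by (simp add: space_grass_borel grass_open_sets)
qed

lemma norm_proj_measurable:
  "(\<lambda>E. norm (proj E a)) \<in> borel_measurable (grass_borel m)"
proof (rule grass_borel_measurableI)
  fix E :: "'a set" and e :: real assume E: "E \<in> grass m" and e: "e > 0"
  show "\<exists>d>0. \<forall>F\<in>grass m. gdist E F < d \<longrightarrow> \<bar>norm (proj F a) - norm (proj E a)\<bar> < e"
  proof (intro exI conjI ballI impI)
    show "e / (norm a + 1) > 0" using e by (simp add: add_nonneg_pos)
    fix F assume F: "F \<in> grass m" and d: "gdist E F < e / (norm a + 1)"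
    have "\<bar>norm (proj F a) - norm (proj E a)\<bar> \<le> norm a * gdist E F"
      using norm_proj_gdist[OF grass_subspace[OF E] grass_subspace[OF F], of a] by (simp add: abs_minus_commute)
    also have "\<dots> \<le> norm a * (e / (norm a + 1))" using d by (intro mult_left_mono) auto
    also have "\<dots> < (norm a + 1) * (e / (norm a + 1))"
      by (rule mult_strict_right_mono) (use e in \<open>auto simp: add_nonneg_pos\<close>)
    also have "\<dots> = e"
    proof -
      have "norm a + 1 > 0" using norm_ge_zero[of a] by linarith
      then show ?thesis by simp
    qed
    finally show "\<bar>norm (proj F a) - norm (proj E a)\<bar> < e" .
  qed
qed

lemma orth_gap:
  fixes E F :: "'a::euclidean_space set"
  assumes E: "subspace E" and F: "subspace F"
    and h: "\<And>u. u \<in> cball 0 1 \<inter> F \<Longrightarrow> infdist u (cball 0 1 \<inter> E) \<le> g"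
    and x: "x \<in> cball 0 1 \<inter> orthogonal_comp E"
  shows "infdist x (cball 0 1 \<inter> orthogonal_comp F) \<le> sqrt g"
proof -
  define u where "u = proj F x"
  have Fo: "subspace (orthogonal_comp F)" by (rule subspace_orthogonal_comp)
  have xu: "x - u \<in> cball 0 1 \<inter> orthogonal_comp F"
  proof -
    have "x - u = proj (orthogonal_comp F) x" using proj_orth_comp[OF F] by (simp add: u_def)
    then show ?thesis using proj_in[OF Fo, of x] norm_proj_le[OF Fo, of x] x by auto
  qed
  have "infdist x (cball 0 1 \<inter> orthogonal_comp F) \<le> dist x (x - u)" by (rule infdist_le[OF xu])
  also have "dist x (x - u) = norm u" by (simp add: dist_norm)
  finally have 1: "infdist x (cball 0 1 \<inter> orthogonal_comp F) \<le> norm u" .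
  have uF: "u \<in> cball 0 1 \<inter> F" using proj_in[OF F, of x] norm_proj_le[OF F, of x] x by (auto simp: u_def)
  obtain y where y: "y \<in> cball 0 1 \<inter> E" "infdist u (cball 0 1 \<inter> E) = dist u y"
    using infdist_attains_inf[OF closed_cball_sub[OF E]] cball_sub_nonempty[OF E] by blast
  have xy: "x \<bullet> y = 0" using x y(1) orth_compD' by blast
  have "(norm u)\<^sup>2 = u \<bullet> u" by (simp add: power2_norm_eq_inner)
  also have "\<dots> = x \<bullet> u" using proj_inner[OF F, of u x] uF by (simp add: u_def)
  also have "\<dots> = x \<bullet> (u - y)" using xy by (simp add: inner_diff_right)
  also have "\<dots> \<le> norm x * norm (u - y)" by (rule Cauchy_Schwarz_ineq2[THEN abs_le_D1])
  also have "\<dots> \<le> norm (u - y)" using x by (simp add: mult_left_le_one_le)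
  also have "\<dots> \<le> g" using h[OF uF] y(2) by (simp add: dist_norm)
  finally have "(norm u)\<^sup>2 \<le> g" .
  then have "norm u \<le> sqrt g" by (simp add: real_le_rsqrt)
  with 1 show ?thesis by linarith
qed

lemma gdist_orth:
  fixes E F :: "'a::euclidean_space set"
  assumes E: "subspace E" and F: "subspace F"
  shows "gdist (orthogonal_comp E) (orthogonal_comp F) \<le> sqrt (gdist E F)"
  by (rule gdist_le[OF subspace_orthogonal_comp subspace_orthogonal_comp])
     (auto intro: orth_gap[OF E F gdist_ge2[OF E F]] orth_gap[OF F E gdist_ge1[OF E F]])

lemma orth_comp_Pi: "(orthogonal_comp :: 'a::euclidean_space set \<Rightarrow> 'a set) \<in> space (grass_borel m) \<rightarrow> grass (DIM('a) - m)"
  unfolding space_grass_borel using orth_comp_grass[where m=m and 'a='a] by (simp add: Pi_iff)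

lemma orth_comp_measurable_gen:
  fixes m k :: nat
  assumes k: "k = DIM('a) - m"
  shows "(orthogonal_comp :: 'a::euclidean_space set \<Rightarrow> 'a set) \<in> measurable (grass_borel m) (grass_borel k)"
  unfolding grass_borel_def[of k]
proof (rule measurable_measure_of)
  show "{U. grass_open k U} \<subseteq> Pow (grass k)" by (auto simp: grass_open_def)
  show "orthogonal_comp \<in> space (grass_borel m) \<rightarrow> (grass k :: 'a set set)"
    using orth_comp_Pi[where m=m and 'a='a] k by simp
  fix A :: "'a set set" assume "A \<in> {U. grass_open k U}"
  then have A: "grass_open k A" by simp
  have "grass_open m (orthogonal_comp -` A \<inter> grass m)"
    unfolding grass_open_def
  proof (intro conjI ballI)
    show "orthogonal_comp -` A \<inter> grass m \<subseteq> grass m" by blast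
    fix E :: "'a set" assume E: "E \<in> orthogonal_comp -` A \<inter> grass m"
    then obtain e where e: "e > 0" "\<forall>F'\<in>grass k. gdist (orthogonal_comp E) F' < e \<longrightarrow> F' \<in> A"
      using A unfolding grass_open_def by blast
    show "\<exists>d>0. \<forall>F\<in>grass m. gdist E F < d \<longrightarrow> F \<in> orthogonal_comp -` A \<inter> grass m"
    proof (intro exI conjI ballI impI)
      show "e\<^sup>2 > 0" using e by simp
      fix F assume F: "F \<in> grass m" and d: "gdist E F < e\<^sup>2"
      have "gdist (orthogonal_comp E) (orthogonal_comp F) \<le> sqrt (gdist E F)"
        using gdist_orth E F by (auto simp: grass_def)
      also have "\<dots> < sqrt (e\<^sup>2)" by (rule real_sqrt_less_mono[OF d])
      also have "\<dots> = e" using e by simp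
      finally have lt: "gdist (orthogonal_comp E) (orthogonal_comp F) < e" .
      have "orthogonal_comp F \<in> grass k" using orth_comp_grass[OF F] k by simp
      then have "orthogonal_comp F \<in> A" using e(2) lt by blast
      then show "F \<in> orthogonal_comp -` A \<inter> grass m" using F by blast
    qed
  qed
  then show "orthogonal_comp -` A \<inter> space (grass_borel m) \<in> sets (grass_borel m)"
    by (simp add: space_grass_borel grass_open_sets)
qed



section \<open>Series and the Radon transform\<close>

lemma fm_integral_suminf:
  fixes f :: "nat \<Rightarrow> 'b \<Rightarrow> real"
  assumes M: "finite_measure M"
    and fm: "\<And>i. f i \<in> borel_measurable M"
    and bd: "\<And>i x. x \<in> space M \<Longrightarrow> \<bar>f i x\<bar> \<le> b i"
    and sb: "summable b"
  shows "(\<integral>x. (\<Sum>i. f i x) \<partial>M) = (\<Sum>i. integral\<^sup>L M (f i))"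
proof -
  interpret finite_measure M by (rule M)
  have int: "integrable M (f i)" for i
    by (rule integrable_const_bound[where B="b i"]) (use bd fm in auto)
  show ?thesis
  proof (rule integral_suminf[OF int])
    show "AE x in M. summable (\<lambda>i. norm (f i x))"
      by (intro AE_I2 summable_comparison_test'[OF sb]) (use bd in auto)
    show "summable (\<lambda>i. \<integral>x. norm (f i x) \<partial>M)"
    proof (rule summable_comparison_test'[where g="\<lambda>i. b i * measure M (space M)"])
      show "summable (\<lambda>i. b i * measure M (space M))" using sb by (rule summable_mult2)
      fix i
      have "(\<integral>x. norm (f i x) \<partial>M) \<le> (\<integral>x. b i \<partial>M)"
        using int bd by (intro integral_mono) auto
      moreover have "0 \<le> (\<integral>x. norm (f i x) \<partial>M)" by simp
      ultimately show "norm (\<integral>x. norm (f i x) \<partial>M) \<le> b i * measure M (space M)"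
        by (simp add: mult.commute)
    qed
  qed
qed

lemma grass_dim1:
  assumes "F \<in> grass j" "j \<ge> 1" shows "subspace F" "dim F \<ge> 1"
  using assms by (auto simp: grass_def)

lemma cont_sphere_sub:
  fixes F :: "'a::euclidean_space set"
  shows "continuous_on (sphere 0 1) f \<Longrightarrow> continuous_on (sphere 0 1 \<inter> F) f"
  by (rule continuous_on_subset) auto

lemma radon_integrable:
  fixes F :: "'a::euclidean_space set"
  assumes F: "subspace F" "dim F \<ge> 1" and f: "continuous_on (sphere 0 1 \<inter> F) (f :: 'a \<Rightarrow> real)"
  shows "integrable (haar_sphere F) f"
  by (rule inv_meas_integrable[OF haar_inv_meas[OF F] F(1) f])

lemma radon_bound:
  fixes F :: "'a::euclidean_space set"
  assumes F: "subspace F" "dim F \<ge> 1" and f: "continuous_on (sphere 0 1) f"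
    and B: "\<And>z. z \<in> sphere 0 1 \<Longrightarrow> \<bar>f z\<bar> \<le> B"
  shows "\<bar>radon f F\<bar> \<le> B"
  unfolding radon_def
  by (rule inv_meas_int_bound[OF haar_inv_meas[OF F] F(1) cont_sphere_sub[OF f]]) (use B in auto)

lemma radon_diff:
  fixes F :: "'a::euclidean_space set"
  assumes F: "subspace F" "dim F \<ge> 1" and f: "continuous_on (sphere 0 1) f" and g: "continuous_on (sphere 0 1) g"
  shows "radon (\<lambda>z. f z - g z) F = radon f F - radon g F"
  unfolding radon_def
  by (rule Bochner_Integration.integral_diff; rule radon_integrable[OF F]; rule cont_sphere_sub) (fact f g)+

lemma cmom_bound:
  fixes F :: "'a::euclidean_space set"
  assumes F: "subspace F" "dim F \<ge> 1"
  shows "\<bar>cmom F n\<bar> \<le> 1"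
  unfolding cmom_def
proof (rule inv_meas_int_bound[OF haar_inv_meas[OF F] F(1)])
  show "continuous_on (sphere 0 1 \<inter> F) (\<lambda>z. (z \<bullet> e0 F) ^ n)" by (intro continuous_intros)
  fix z :: 'a assume z: "z \<in> sphere 0 1 \<inter> F"
  have e: "norm (e0 F) = 1" using e0_in[OF F] by simp
  have "\<bar>z \<bullet> e0 F\<bar> \<le> 1" using Cauchy_Schwarz_ineq2[of z "e0 F"] z e by simp
  then show "\<bar>(z \<bullet> e0 F) ^ n\<bar> \<le> 1" by (simp add: power_abs power_le_one)
qed

lemma exp_series_real: "exp (x::real) = (\<Sum>n. x ^ n / fact n)"
  using sums_unique[OF exp_converges[of x]] by (simp add: divide_inverse_commute scaleR_conv_of_real)

lemma summable_exp_bound: "summable (\<lambda>n. (r::real) ^ n / fact n)"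
  using summable_exp[of r] by (simp add: divide_inverse mult.commute)

lemma radon_exp:
  fixes F :: "'a::euclidean_space set"
  assumes F: "subspace F" "dim F \<ge> 1"
  shows "radon (\<lambda>z. exp (z \<bullet> a)) F = (\<Sum>n. cmom F n / fact n * norm (proj F a) ^ n)"
proof -
  have t: "inv_meas F (haar_sphere F)" by (rule haar_inv_meas[OF F])
  have "radon (\<lambda>z. exp (z \<bullet> a)) F = (\<integral>z. (\<Sum>n. (z \<bullet> a) ^ n / fact n) \<partial>haar_sphere F)"
    unfolding radon_def by (simp add: exp_series_real)
  also have "\<dots> = (\<Sum>n. \<integral>z. (z \<bullet> a) ^ n / fact n \<partial>haar_sphere F)"
  proof (rule fm_integral_suminf[OF inv_meas_finite[OF t], where b="\<lambda>n. norm a ^ n / fact n"])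
    show "(\<lambda>z. (z \<bullet> a) ^ n / fact n) \<in> borel_measurable (haar_sphere F)" for n
      by (rule inv_meas_borel[OF t]) measurable
    fix n and z assume "z \<in> space (haar_sphere F)"
    then have z: "norm z = 1" using inv_meas_space[OF t] by auto
    have "\<bar>z \<bullet> a\<bar> \<le> norm a" using Cauchy_Schwarz_ineq2[of z a] z by simp
    then have "\<bar>z \<bullet> a\<bar> ^ n \<le> norm a ^ n" by (rule power_mono) simp
    then show "\<bar>(z \<bullet> a) ^ n / fact n\<bar> \<le> norm a ^ n / fact n"
      by (simp add: power_abs divide_right_mono)
  qed (rule summable_exp_bound)
  also have "\<dots> = (\<Sum>n. cmom F n / fact n * norm (proj F a) ^ n)"
  proof -
    have "(\<integral>z. (z \<bullet> a) ^ n / fact n \<partial>haar_sphere F) = cmom F n / fact n * norm (proj F a) ^ n" for n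
      using moment_formula[OF F, of a n] by simp
    then show ?thesis by simp
  qed
  finally show ?thesis .
qed

lemma expsum_dense:
  fixes S :: "'a::euclidean_space set"
  assumes S: "compact S" and f: "continuous_on S f" and e: "e > 0"
  shows "\<exists>L. \<forall>x\<in>S. \<bar>f x - expsum L x\<bar> < e"
proof -
  let ?P = "\<lambda>g. \<exists>L. g = expsum L"
  have "\<exists>g. ?P g \<and> (\<forall>x\<in>S. \<bar>f x - g x\<bar> < e)"
  proof (rule Stone_Weierstrass_HOL[where P="?P"])
    show "?P (\<lambda>x. c)" for c
      by (rule exI[of _ "[(c, 0)]"]) (simp add: fun_eq_iff)
    show "continuous_on S g" if "?P g" for g using that expsum_cont by blast
    show "?P (\<lambda>x. g x + h x)" if "?P g \<and> ?P h" for g h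
    proof -
      from that obtain L1 L2 where "g = expsum L1" "h = expsum L2" by blast
      then show ?thesis by (intro exI[of _ "L1 @ L2"]) (simp add: fun_eq_iff expsum_append)
    qed
    show "?P (\<lambda>x. g x * h x)" if "?P g \<and> ?P h" for g h
    proof -
      from that obtain L1 L2 where "g = expsum L1" "h = expsum L2" by blast
      then show ?thesis by (intro exI[of _ "mulL L1 L2"]) (simp add: fun_eq_iff expsum_mulL)
    qed
    show "\<exists>g. ?P g \<and> g x \<noteq> g y" if "x \<in> S \<and> y \<in> S \<and> x \<noteq> y" for x y
    proof (rule exI[of _ "expsum [(1, x - y)]"], intro conjI)
      show "?P (expsum [(1, x - y)])" by blast
      have "(x - y) \<bullet> (x - y) > 0" using that by simp
      then have "x \<bullet> (x - y) \<noteq> y \<bullet> (x - y)" by (simp add: inner_diff_left)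
      then show "expsum [(1, x - y)] x \<noteq> expsum [(1, x - y)] y" by simp
    qed
  qed (use S f e in auto)
  then show ?thesis by blast
qed

lemma radon_expsum:
  fixes F :: "'a::euclidean_space set"
  assumes F: "subspace F" "dim F \<ge> 1"
  shows "radon (expsum L) F = (\<Sum>(c,a)\<leftarrow>L. c * radon (\<lambda>z. exp (z \<bullet> a)) F)"
proof (induction L)
  case Nil then show ?case by (simp add: radon_def expsum_def[abs_def])
next
  case (Cons p L)
  obtain c a where p: "p = (c, a)" by (cases p)
  have "expsum (p # L) = (\<lambda>z. c * exp (z \<bullet> a) + expsum L z)" by (rule ext) (simp add: p)
  then have "radon (expsum (p # L)) F = radon (\<lambda>z. c * exp (z \<bullet> a) + expsum L z) F" by simp
  also have "\<dots> = radon (\<lambda>z. c * exp (z \<bullet> a)) F + radon (expsum L) F"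
    unfolding radon_def
    by (rule Bochner_Integration.integral_add; rule radon_integrable[OF F])
       (auto intro!: continuous_intros expsum_cont)
  also have "radon (\<lambda>z. c * exp (z \<bullet> a)) F = c * radon (\<lambda>z. exp (z \<bullet> a)) F"
    by (simp add: radon_def)
  finally show ?case using Cons by (simp add: p)
qed



locale keyset =
  fixes M :: "'b measure" and h :: "'b \<Rightarrow> 'a::euclidean_space set" and j :: nat and F0 :: "'a set"
  assumes fin: "finite_measure M"
  and hj: "\<And>E. E \<in> space M \<Longrightarrow> h E \<in> grass j"
  and j1: "j \<ge> 1" and F0: "F0 \<in> grass j"
  and hm: "\<And>a. (\<lambda>E. norm (proj (h E) a)) \<in> borel_measurable M"
begin

interpretation finite_measure M by (rule fin)

lemma hsub: "E \<in> space M \<Longrightarrow> subspace (h E)" "E \<in> space M \<Longrightarrow> dim (h E) \<ge> 1"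
  using grass_dim1[OF hj j1] by auto

lemma F0sub: "subspace F0" "dim F0 \<ge> 1"
  using grass_dim1[OF F0 j1] by auto

lemma cm: "E \<in> space M \<Longrightarrow> cmom (h E) n = cmom F0 n"
  using cmom_dim[OF hj F0 j1] .

lemma radon_exp_h:
  "E \<in> space M \<Longrightarrow> radon (\<lambda>z. exp (z \<bullet> a)) (h E) = (\<Sum>n. cmom F0 n / fact n * norm (proj (h E) a) ^ n)"
  using radon_exp[OF hsub, of E a] cm by simp

lemma meas_exp: "(\<lambda>E. radon (\<lambda>z. exp (z \<bullet> a)) (h E)) \<in> borel_measurable M"
proof -
  have [measurable]: "(\<lambda>E. norm (proj (h E) a)) \<in> borel_measurable M" by (rule hm)
  have "(\<lambda>E. (\<Sum>n. cmom F0 n / fact n * norm (proj (h E) a) ^ n)) \<in> borel_measurable M"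
    by measurable
  then show ?thesis by (rule measurable_cong[THEN iffD1, rotated]) (simp add: radon_exp_h)
qed

lemma meas_expsum: "(\<lambda>E. radon (expsum L) (h E)) \<in> borel_measurable M"
proof -
  have "(\<lambda>E. \<Sum>(c,a)\<leftarrow>L. c * radon (\<lambda>z. exp (z \<bullet> a)) (h E)) \<in> borel_measurable M"
  proof (induction L)
    case Nil then show ?case by simp
  next
    case (Cons p L)
    obtain c a where p: "p = (c, a)" by (cases p)
    have [measurable]: "(\<lambda>E. radon (\<lambda>z. exp (z \<bullet> a)) (h E)) \<in> borel_measurable M" by (rule meas_exp)
    show ?case using Cons by (simp add: p)
  qed
  then show ?thesis by (rule measurable_cong[THEN iffD1, rotated]) (simp add: radon_expsum[OF hsub])
qed

lemma radon_h_bound: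
  assumes f: "continuous_on (sphere 0 1) f" and B: "\<And>z. z \<in> sphere 0 1 \<Longrightarrow> \<bar>f z\<bar> \<le> B"
  shows "E \<in> space M \<Longrightarrow> \<bar>radon f (h E)\<bar> \<le> B"
  using radon_bound[OF hsub f B] .

lemma cont_bounded_sphere:
  fixes f :: "'a \<Rightarrow> real"
  assumes f: "continuous_on (sphere 0 1) f"
  obtains B where "\<And>z. z \<in> sphere 0 1 \<Longrightarrow> \<bar>f z\<bar> \<le> B"
  using cont_bounded_sph[OF subspace_UNIV, of f] f by auto

lemma meas_radon:
  assumes f: "continuous_on (sphere 0 1) f"
  shows "(\<lambda>E. radon f (h E)) \<in> borel_measurable M"
proof -
  have "\<exists>L. \<forall>x\<in>sphere 0 1. \<bar>f x - expsum L x\<bar> < 1 / (Suc k)" for k :: nat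
    by (rule expsum_dense[OF compact_sphere f]) simp
  then obtain L where L: "\<And>k. \<forall>x\<in>sphere 0 1. \<bar>f x - expsum (L k) x\<bar> < 1 / (Suc k)" by metis
  show ?thesis
  proof (rule borel_measurable_LIMSEQ_real[where u="\<lambda>k E. radon (expsum (L k)) (h E)"])
    show "(\<lambda>E. radon (expsum (L k)) (h E)) \<in> borel_measurable M" for k by (rule meas_expsum)
    fix E assume E: "E \<in> space M"
    have d: "\<bar>radon (expsum (L k)) (h E) - radon f (h E)\<bar> \<le> 1 / Suc k" for k
    proof -
      have "radon (expsum (L k)) (h E) - radon f (h E) = - radon (\<lambda>z. f z - expsum (L k) z) (h E)"
        using radon_diff[OF hsub(1)[OF E] hsub(2)[OF E] f expsum_cont] by simp
      also have "\<bar>\<dots>\<bar> \<le> 1 / Suc k"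
      proof -
        have Bk: "\<bar>f z - expsum (L k) z\<bar> \<le> 1 / Suc k" if "z \<in> sphere 0 1" for z
          using L[of k] that less_imp_le by blast
        have ck: "continuous_on (sphere 0 1) (\<lambda>z. f z - expsum (L k) z)"
          using f by (intro continuous_intros expsum_cont)
        show ?thesis using radon_h_bound[OF ck Bk E] by simp
      qed
      finally show ?thesis .
    qed
    show "(\<lambda>k. radon (expsum (L k)) (h E)) \<longlonglongrightarrow> radon f (h E)"
    proof (rule LIMSEQ_I)
      fix r :: real assume r: "r > 0"
      obtain N :: nat where N: "1 / r < N" using reals_Archimedean2 by blast
      show "\<exists>no. \<forall>n\<ge>no. norm (radon (expsum (L n)) (h E) - radon f (h E)) < r"
      proof (intro exI allI impI)
        fix n assume "N \<le> n"
        then have "1 / r < Suc n" using N by linarith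
        then have "1 / Suc n < r" using r by (simp add: field_simps)
        then show "norm (radon (expsum (L n)) (h E) - radon f (h E)) < r" using d[of n] by simp
      qed
    qed
  qed
qed

lemma int_radon:
  assumes f: "continuous_on (sphere 0 1) f"
  shows "integrable M (\<lambda>E. radon f (h E))"
proof -
  obtain B where B: "\<And>z. z \<in> sphere 0 1 \<Longrightarrow> \<bar>f z\<bar> \<le> B" using cont_bounded_sphere[OF f] by blast
  show ?thesis
    by (rule integrable_const_bound[where B=B]) (use radon_h_bound[OF f B] meas_radon[OF f] in auto)
qed

lemma int_radon_approx:
  assumes f: "continuous_on (sphere 0 1) f" and g: "continuous_on (sphere 0 1) g"
    and e: "\<And>z. z \<in> sphere 0 1 \<Longrightarrow> \<bar>f z - g z\<bar> \<le> e"
  shows "\<bar>(\<integral>E. radon f (h E) \<partial>M) - (\<integral>E. radon g (h E) \<partial>M)\<bar> \<le> e * measure M (space M)"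
proof -
  have fg: "continuous_on (sphere 0 1) (\<lambda>z. f z - g z)" using f g by (intro continuous_intros)
  have "(\<integral>E. radon f (h E) \<partial>M) - (\<integral>E. radon g (h E) \<partial>M) = (\<integral>E. radon f (h E) - radon g (h E) \<partial>M)"
    by (rule Bochner_Integration.integral_diff[symmetric]) (use int_radon f g in auto)
  also have "\<dots> = (\<integral>E. radon (\<lambda>z. f z - g z) (h E) \<partial>M)"
    by (rule Bochner_Integration.integral_cong[OF refl]) (simp add: radon_diff[OF hsub(1) hsub(2) f g])
  finally have eq: "(\<integral>E. radon f (h E) \<partial>M) - (\<integral>E. radon g (h E) \<partial>M) = (\<integral>E. radon (\<lambda>z. f z - g z) (h E) \<partial>M)" .
  have "\<bar>\<integral>E. radon (\<lambda>z. f z - g z) (h E) \<partial>M\<bar> \<le> (\<integral>E. \<bar>radon (\<lambda>z. f z - g z) (h E)\<bar> \<partial>M)"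
    by (rule integral_abs_bound)
  also have "\<dots> \<le> (\<integral>E. e \<partial>M)"
    by (rule integral_mono) (use int_radon[OF fg] radon_h_bound[OF fg e] in auto)
  also have "\<dots> = e * measure M (space M)" by simp
  finally show ?thesis using eq by simp
qed

lemma int_exp:
  "(\<integral>E. radon (\<lambda>z. exp (z \<bullet> a)) (h E) \<partial>M) =
     (\<Sum>n. cmom F0 n / fact n * (\<integral>E. norm (proj (h E) a) ^ n \<partial>M))"
proof -
  have [measurable]: "(\<lambda>E. norm (proj (h E) a)) \<in> borel_measurable M" by (rule hm)
  have "(\<integral>E. radon (\<lambda>z. exp (z \<bullet> a)) (h E) \<partial>M) = (\<integral>E. (\<Sum>n. cmom F0 n / fact n * norm (proj (h E) a) ^ n) \<partial>M)"
    by (rule Bochner_Integration.integral_cong[OF refl]) (simp add: radon_exp_h)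
  also have "\<dots> = (\<Sum>n. \<integral>E. cmom F0 n / fact n * norm (proj (h E) a) ^ n \<partial>M)"
  proof (rule fm_integral_suminf[OF fin, where b="\<lambda>n. norm a ^ n / fact n"])
    show "(\<lambda>E. cmom F0 n / fact n * norm (proj (h E) a) ^ n) \<in> borel_measurable M" for n by measurable
    fix n E assume E: "E \<in> space M"
    have c: "\<bar>cmom F0 n\<bar> \<le> 1" by (rule cmom_bound[OF F0sub])
    have p: "norm (proj (h E) a) ^ n \<le> norm a ^ n"
      by (rule power_mono[OF norm_proj_le[OF hsub(1)[OF E]]]) simp
    have "\<bar>cmom F0 n / fact n * norm (proj (h E) a) ^ n\<bar> = \<bar>cmom F0 n\<bar> * (norm (proj (h E) a) ^ n) / fact n"
      by (simp add: abs_mult)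
    also have "\<dots> \<le> 1 * (norm a ^ n) / fact n"
      by (intro divide_right_mono mult_mono c p) auto
    finally show "\<bar>cmom F0 n / fact n * norm (proj (h E) a) ^ n\<bar> \<le> norm a ^ n / fact n" by simp
  qed (rule summable_exp_bound)
  also have "\<dots> = (\<Sum>n. cmom F0 n / fact n * (\<integral>E. norm (proj (h E) a) ^ n \<partial>M))"
    by simp
  finally show ?thesis .
qed

lemma int_moment:
  "(\<integral>E. radon (\<lambda>z. (z \<bullet> a) ^ n) (h E) \<partial>M) = cmom F0 n * (\<integral>E. norm (proj (h E) a) ^ n \<partial>M)"
proof -
  have "(\<integral>E. radon (\<lambda>z. (z \<bullet> a) ^ n) (h E) \<partial>M) = (\<integral>E. cmom F0 n * norm (proj (h E) a) ^ n \<partial>M)"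
    by (rule Bochner_Integration.integral_cong[OF refl])
       (simp add: radon_def moment_formula[OF hsub] cm)
  then show ?thesis by simp
qed

end

lemma keyset_M2:
  assumes "keyset M1 h j F0" "finite_measure M2" "sets M1 = sets M2"
  shows "keyset M2 h j F0"
proof -
  interpret k1: keyset M1 h j F0 by fact
  show ?thesis
  proof (rule keyset.intro)
    show "finite_measure M2" by fact
    show "h E \<in> grass j" if "E \<in> space M2" for E
      using k1.hj that sets_eq_imp_space_eq[OF assms(3)] by simp
    show "(\<lambda>E. norm (proj (h E) a)) \<in> borel_measurable M2" for a
      using k1.hm measurable_cong_sets[OF assms(3) refl] by blast
  qed (use k1.j1 k1.F0 in auto)
qed

lemma key_equiv:
  fixes h :: "'b \<Rightarrow> 'a::euclidean_space set"
  assumes k1: "keyset M1 h j F0" and M2: "finite_measure M2" and S: "sets M1 = sets M2"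
  shows "(\<forall>f::'a \<Rightarrow> real. continuous_on (sphere 0 1) f \<longrightarrow>
            (\<integral>E. radon f (h E) \<partial>M1) = (\<integral>E. radon f (h E) \<partial>M2)) \<longleftrightarrow>
         (\<forall>a d. (\<integral>E. norm (proj (h E) a) ^ (2 * d) \<partial>M1) = (\<integral>E. norm (proj (h E) a) ^ (2 * d) \<partial>M2))"
proof -
  interpret k1: keyset M1 h j F0 by fact
  interpret k2: keyset M2 h j F0 by (rule keyset_M2[OF k1 M2 S])
  interpret f1: finite_measure M1 by (rule k1.fin)
  interpret f2: finite_measure M2 by (rule M2)
  show ?thesis
  proof
    assume H: "\<forall>f::'a \<Rightarrow> real. continuous_on (sphere 0 1) f \<longrightarrow>
            (\<integral>E. radon f (h E) \<partial>M1) = (\<integral>E. radon f (h E) \<partial>M2)"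
    show "\<forall>a d. (\<integral>E. norm (proj (h E) a) ^ (2 * d) \<partial>M1) = (\<integral>E. norm (proj (h E) a) ^ (2 * d) \<partial>M2)"
    proof (intro allI)
      fix a :: 'a and d :: nat
      have "continuous_on (sphere 0 1) (\<lambda>z. (z \<bullet> a) ^ (2 * d))" by (intro continuous_intros)
      then have "(\<integral>E. radon (\<lambda>z. (z \<bullet> a) ^ (2 * d)) (h E) \<partial>M1) = (\<integral>E. radon (\<lambda>z. (z \<bullet> a) ^ (2 * d)) (h E) \<partial>M2)"
        using H by blast
      then have "cmom F0 (2 * d) * (\<integral>E. norm (proj (h E) a) ^ (2 * d) \<partial>M1) =
                 cmom F0 (2 * d) * (\<integral>E. norm (proj (h E) a) ^ (2 * d) \<partial>M2)"
        by (simp add: k1.int_moment k2.int_moment)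
      moreover have "cmom F0 (2 * d) > 0" by (rule cmom_even_pos[OF k1.F0sub])
      ultimately show "(\<integral>E. norm (proj (h E) a) ^ (2 * d) \<partial>M1) = (\<integral>E. norm (proj (h E) a) ^ (2 * d) \<partial>M2)"
        by simp
    qed
  next
    assume H: "\<forall>a d. (\<integral>E. norm (proj (h E) a) ^ (2 * d) \<partial>M1) = (\<integral>E. norm (proj (h E) a) ^ (2 * d) \<partial>M2)"
    have mom: "cmom F0 n / fact n * (\<integral>E. norm (proj (h E) a) ^ n \<partial>M1) =
               cmom F0 n / fact n * (\<integral>E. norm (proj (h E) a) ^ n \<partial>M2)" for a n
    proof (cases "even n")
      case True
      then obtain d where "n = 2 * d" by blast
      then show ?thesis using H by simp
    next
      case False
      then show ?thesis using cmom_odd[OF k1.F0sub] by simp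
    qed
    have ex: "(\<integral>E. radon (\<lambda>z. exp (z \<bullet> a)) (h E) \<partial>M1) = (\<integral>E. radon (\<lambda>z. exp (z \<bullet> a)) (h E) \<partial>M2)" for a
    proof -
      have "(\<lambda>n. cmom F0 n / fact n * (\<integral>E. norm (proj (h E) a) ^ n \<partial>M1)) =
            (\<lambda>n. cmom F0 n / fact n * (\<integral>E. norm (proj (h E) a) ^ n \<partial>M2))"
        by (rule ext) (rule mom)
      then show ?thesis unfolding k1.int_exp k2.int_exp by simp
    qed
    have es: "(\<integral>E. radon (expsum L) (h E) \<partial>M1) = (\<integral>E. radon (expsum L) (h E) \<partial>M2)" for L
    proof (induction L)
      case Nil then show ?case by (simp add: radon_def expsum_def[abs_def])
    next
      case (Cons p L)
      obtain c a where p: "p = (c, a)" by (cases p)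
      have ce: "continuous_on (sphere 0 1) (\<lambda>z. exp (z \<bullet> a) :: real)" by (intro continuous_intros)
      have split: "(\<integral>E. radon (expsum (p # L)) (h E) \<partial>M) =
           c * (\<integral>E. radon (\<lambda>z. exp (z \<bullet> a)) (h E) \<partial>M) + (\<integral>E. radon (expsum L) (h E) \<partial>M)"
        if k: "keyset M h j F0" for M
      proof -
        interpret k: keyset M h j F0 by (rule k)
        have "(\<integral>E. radon (expsum (p # L)) (h E) \<partial>M) =
              (\<integral>E. c * radon (\<lambda>z. exp (z \<bullet> a)) (h E) + radon (expsum L) (h E) \<partial>M)"
          by (rule Bochner_Integration.integral_cong[OF refl])
             (simp add: radon_expsum[OF k.hsub] p)
        also have "\<dots> = (\<integral>E. c * radon (\<lambda>z. exp (z \<bullet> a)) (h E) \<partial>M) + (\<integral>E. radon (expsum L) (h E) \<partial>M)"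
          by (rule Bochner_Integration.integral_add) (use k.int_radon[OF ce] k.int_radon[OF expsum_cont] in auto)
        finally show ?thesis by simp
      qed
      show ?case using split[OF k1] split[OF keyset_M2[OF k1 M2 S]] Cons ex by simp
    qed
    show "\<forall>f::'a \<Rightarrow> real. continuous_on (sphere 0 1) f \<longrightarrow>
            (\<integral>E. radon f (h E) \<partial>M1) = (\<integral>E. radon f (h E) \<partial>M2)"
    proof (intro allI impI)
      fix f :: "'a \<Rightarrow> real" assume f: "continuous_on (sphere 0 1) f"
      let ?m = "measure M1 (space M1) + measure M2 (space M2) + 1"
      have m: "?m > 0" by (simp add: add_nonneg_pos)
      have "\<bar>(\<integral>E. radon f (h E) \<partial>M1) - (\<integral>E. radon f (h E) \<partial>M2)\<bar> \<le> 0 + e" if e: "e > 0" for e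
      proof -
        obtain L where L: "\<forall>x\<in>sphere 0 1. \<bar>f x - expsum L x\<bar> < e / ?m"
          using expsum_dense[OF compact_sphere f, of "e / ?m"] e m by auto
        have a1: "\<bar>(\<integral>E. radon f (h E) \<partial>M) - (\<integral>E. radon (expsum L) (h E) \<partial>M)\<bar> \<le> e / ?m * measure M (space M)"
          if k: "keyset M h j F0" for M
        proof -
          interpret k: keyset M h j F0 by (rule k)
          show ?thesis by (rule k.int_radon_approx[OF f expsum_cont]) (use L in \<open>auto intro: less_imp_le\<close>)
        qed
        have b1: "\<bar>(\<integral>E. radon f (h E) \<partial>M1) - (\<integral>E. radon (expsum L) (h E) \<partial>M1)\<bar> \<le> e / ?m * measure M1 (space M1)"
          by (rule a1[OF k1])
        have b2: "\<bar>(\<integral>E. radon f (h E) \<partial>M2) - (\<integral>E. radon (expsum L) (h E) \<partial>M2)\<bar> \<le> e / ?m * measure M2 (space M2)"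
          by (rule a1[OF keyset_M2[OF k1 M2 S]])
        have "e / ?m * measure M1 (space M1) + e / ?m * measure M2 (space M2) = e / ?m * (?m - 1)"
          by (simp add: algebra_simps add_divide_distrib)
        also have "\<dots> \<le> e / ?m * ?m" using e m by (intro mult_left_mono) auto
        also have "\<dots> = e" using m by simp
        finally have "e / ?m * measure M1 (space M1) + e / ?m * measure M2 (space M2) \<le> e" .
        then show ?thesis using b1 b2 es[of L] by linarith
      qed
      then have "\<bar>(\<integral>E. radon f (h E) \<partial>M1) - (\<integral>E. radon f (h E) \<partial>M2)\<bar> \<le> 0"
        by (rule field_le_epsilon)
      then show "(\<integral>E. radon f (h E) \<partial>M1) = (\<integral>E. radon f (h E) \<partial>M2)" by simp
    qed
  qed
qed



lemma grass_nonempty: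
  assumes "j \<le> DIM('a::euclidean_space)"
  shows "\<exists>F :: 'a set. F \<in> grass j"
proof -
  obtain B where B: "B \<subseteq> (Basis :: 'a set)" "card B = j" "finite B"
    using obtain_subset_with_card_n[of j "Basis :: 'a set"] assms by auto
  have "independent B" using B(1) independent_Basis by (rule independent_mono[rotated])
  then have "dim (span B) = j" using B(2) dim_span_eq_card_independent by metis
  then have "span B \<in> grass j" by (simp add: grass_def subspace_span)
  then show ?thesis by blast
qed

lemma binom_moments:
  fixes u :: "'b \<Rightarrow> real"
  assumes M1: "finite_measure M1" and M2: "finite_measure M2" and S: "sets M1 = sets M2"
    and um: "u \<in> borel_measurable M1"
    and ub: "\<And>x. x \<in> space M1 \<Longrightarrow> \<bar>u x\<bar> \<le> C"
    and H: "\<And>i. (\<integral>x. u x ^ i \<partial>M1) = (\<integral>x. u x ^ i \<partial>M2)"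
  shows "(\<integral>x. (c - u x) ^ d \<partial>M1) = (\<integral>x. (c - u x) ^ d \<partial>M2)"
proof -
  have sp: "space M1 = space M2" by (rule sets_eq_imp_space_eq[OF S])
  have um2: "u \<in> borel_measurable M2" using um measurable_cong_sets[OF S refl] by blast
  have intp: "integrable M (\<lambda>x. u x ^ i)" if "finite_measure M" "u \<in> borel_measurable M"
    "\<And>x. x \<in> space M \<Longrightarrow> \<bar>u x\<bar> \<le> C" for M i
  proof -
    interpret finite_measure M by fact
    show ?thesis
    proof (rule integrable_const_bound[where B="C ^ i"])
      show "AE x in M. norm (u x ^ i) \<le> C ^ i"
      proof (rule AE_I2)
        fix x assume "x \<in> space M"
        then have "\<bar>u x\<bar> \<le> C" by (rule that(3))
        then have "\<bar>u x\<bar> ^ i \<le> C ^ i" by (rule power_mono) simp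
        then show "norm (u x ^ i) \<le> C ^ i" by (simp add: power_abs)
      qed
      show "(\<lambda>x. u x ^ i) \<in> borel_measurable M" using that(2) by measurable
    qed
  qed
  have ex: "(\<integral>x. (c - u x) ^ d \<partial>M) = (\<Sum>i\<le>d. of_nat (d choose i) * ((- 1) ^ i * (\<integral>x. u x ^ i \<partial>M)) * c ^ (d - i))"
    if "finite_measure M" "u \<in> borel_measurable M" "\<And>x. x \<in> space M \<Longrightarrow> \<bar>u x\<bar> \<le> C" for M
  proof -
    have "(c - u x) ^ d = (\<Sum>i\<le>d. of_nat (d choose i) * ((- 1) ^ i * u x ^ i) * c ^ (d - i))" for x
    proof -
      have "(c - u x) ^ d = ((- 1) * u x + c) ^ d" by simp
      also have "\<dots> = (\<Sum>i\<le>d. of_nat (d choose i) * ((- 1) * u x) ^ i * c ^ (d - i))" by (rule binomial_ring)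
      also have "\<dots> = (\<Sum>i\<le>d. of_nat (d choose i) * ((- 1) ^ i * u x ^ i) * c ^ (d - i))"
        by (simp only: power_mult_distrib)
      finally show ?thesis .
    qed
    then have "(\<integral>x. (c - u x) ^ d \<partial>M) = (\<integral>x. (\<Sum>i\<le>d. of_nat (d choose i) * ((- 1) ^ i * u x ^ i) * c ^ (d - i)) \<partial>M)"
      by presburger
    also have "\<dots> = (\<Sum>i\<le>d. \<integral>x. of_nat (d choose i) * ((- 1) ^ i * u x ^ i) * c ^ (d - i) \<partial>M)"
      by (rule Bochner_Integration.integral_sum) (use intp[OF that] in auto)
    also have "\<dots> = (\<Sum>i\<le>d. of_nat (d choose i) * ((- 1) ^ i * (\<integral>x. u x ^ i \<partial>M)) * c ^ (d - i))"
      by (rule sum.cong[OF refl]) simp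
    finally show ?thesis .
  qed
  show ?thesis
    using ex[OF M1 um ub] ex[OF M2 um2 ub[unfolded sp]] H by simp
qed

lemma keyset_id:
  fixes M :: "'a::euclidean_space set measure"
  assumes "finite_measure M" "sets M = sets (grass_borel m)" "m \<ge> 1" "F0 \<in> grass m"
  shows "keyset M (\<lambda>E. E) m F0"
proof (rule keyset.intro)
  show "finite_measure M" by fact
  show "E \<in> grass m" if "E \<in> space M" for E
    using that sets_eq_imp_space_eq[OF assms(2)] by (simp add: space_grass_borel)
  show "(\<lambda>E. norm (proj E a)) \<in> borel_measurable M" for a
    using norm_proj_measurable measurable_cong_sets[OF assms(2) refl] by blast
qed (use assms in auto)

lemma keyset_perp:
  fixes M :: "'a::euclidean_space set measure"
  assumes "finite_measure M" "sets M = sets (grass_borel m)" "k \<ge> 1" "F0 \<in> grass k" "k = DIM('a) - m"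
  shows "keyset M orthogonal_comp k F0"
proof (rule keyset.intro)
  show "finite_measure M" by fact
  show "orthogonal_comp E \<in> grass k" if "E \<in> space M" for E
    using that sets_eq_imp_space_eq[OF assms(2)] orth_comp_grass[of E m] assms(5)
    by (simp add: space_grass_borel)
  show "(\<lambda>E. norm (proj (orthogonal_comp E) a)) \<in> borel_measurable M" for a
  proof -
    have "orthogonal_comp \<in> measurable M (grass_borel k)"
      using orth_comp_measurable_gen[OF assms(5)] measurable_cong_sets[OF assms(2) refl] by blast
    then show ?thesis using norm_proj_measurable by (rule measurable_comp[unfolded comp_def])
  qed
qed (use assms in auto)

theorem mainTheorem10:
  assumes "1 \<le> k" and "k \<le> DIM('a::euclidean_space) - 1"
  shows "(ker_Rstar (DIM('a) - k) :: ('a set measure \<times> 'a set measure) set) =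
         {\<mu> \<in> signed_measures (grass_borel (DIM('a) - k)). perp_measure k \<mu> \<in> ker_Rstar k}"
proof -
  define m where "m = DIM('a) - k"
  have m1: "m \<ge> 1" and km: "k = DIM('a) - m" using assms by (auto simp: m_def)
  obtain F0 :: "'a set" where F0: "F0 \<in> grass m" using grass_nonempty[of m, where 'a='a] by (auto simp: m_def)
  have kD: "k \<le> DIM('a)" using assms by linarith
  obtain F1 :: "'a set" where F1: "F1 \<in> grass k" using grass_nonempty[OF kD] by auto
  have main: "(\<forall>f::'a \<Rightarrow> real. continuous_on (sphere 0 1) f \<longrightarrow> signed_integral (M1, M2) (radon f) = 0)
      \<longleftrightarrow> perp_measure k (M1, M2) \<in> ker_Rstar k"
    if mu: "(M1, M2) \<in> signed_measures (grass_borel m)" for M1 M2 :: "'a set measure"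
  proof -
    have f1: "finite_measure M1" and f2: "finite_measure M2"
      and s1: "sets M1 = sets (grass_borel m)" and s2: "sets M2 = sets (grass_borel m)"
      using mu by (auto simp: signed_measures_def)
    have s12: "sets M1 = sets M2" using s1 s2 by simp
    have k1: "keyset M1 (\<lambda>E. E) m F0" by (rule keyset_id[OF f1 s1 m1 F0])
    have kp1: "keyset M1 orthogonal_comp k F1" by (rule keyset_perp[OF f1 s1 assms(1) F1 km])
    have kp2: "keyset M2 orthogonal_comp k F1" by (rule keyset_perp[OF f2 s2 assms(1) F1 km])
    have L: "(\<forall>f::'a \<Rightarrow> real. continuous_on (sphere 0 1) f \<longrightarrow> signed_integral (M1, M2) (radon f) = 0)
        \<longleftrightarrow> (\<forall>a d. (\<integral>E. norm (proj E a) ^ (2 * d) \<partial>M1) = (\<integral>E. norm (proj E a) ^ (2 * d) \<partial>M2))"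
      using key_equiv[OF k1 f2 s12] by (simp add: signed_integral_def)
    have om1: "orthogonal_comp \<in> measurable M1 (grass_borel k)"
      using orth_comp_measurable_gen[OF km] measurable_cong_sets[OF s1 refl] by blast
    have om2: "orthogonal_comp \<in> measurable M2 (grass_borel k)"
      using orth_comp_measurable_gen[OF km] measurable_cong_sets[OF s2 refl] by blast
    have fd1: "finite_measure (distr M1 (grass_borel k) orthogonal_comp)"
      using finite_measure.finite_measure_distr[OF f1 om1] .
    have fd2: "finite_measure (distr M2 (grass_borel k) orthogonal_comp)"
      using finite_measure.finite_measure_distr[OF f2 om2] .
    have sm: "perp_measure k (M1, M2) \<in> signed_measures (grass_borel k)"
      using fd1 fd2 by (simp add: perp_measure_def signed_measures_def)
    have rm: "radon f \<in> borel_measurable (grass_borel k)" if f: "continuous_on (sphere 0 1) f" for f :: "'a \<Rightarrow> real"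
    proof -
      have "keyset (distr M1 (grass_borel k) orthogonal_comp) (\<lambda>E. E) k F1"
        by (rule keyset_id[OF fd1 _ assms(1) F1]) simp
      then have "(\<lambda>E. radon f E) \<in> borel_measurable (distr M1 (grass_borel k) orthogonal_comp)"
        by (rule keyset.meas_radon[OF _ f])
      then show ?thesis using measurable_cong_sets[of "distr M1 (grass_borel k) orthogonal_comp" "grass_borel k"] by simp
    qed
    have dint: "(\<integral>E. radon f E \<partial>distr M (grass_borel k) orthogonal_comp) = (\<integral>E. radon f (orthogonal_comp E) \<partial>M)"
      if "orthogonal_comp \<in> measurable M (grass_borel k)" "continuous_on (sphere 0 1) f" for M :: "'a set measure" and f :: "'a \<Rightarrow> real"
      by (rule integral_distr[OF that(1) rm[OF that(2)]])
    have R: "perp_measure k (M1, M2) \<in> ker_Rstar k \<longleftrightarrow>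
        (\<forall>f::'a \<Rightarrow> real. continuous_on (sphere 0 1) f \<longrightarrow>
            (\<integral>E. radon f (orthogonal_comp E) \<partial>M1) = (\<integral>E. radon f (orthogonal_comp E) \<partial>M2))"
      using sm dint[OF om1] dint[OF om2]
      by (auto simp: ker_Rstar_def signed_integral_def perp_measure_def)
    have R2: "\<dots> \<longleftrightarrow> (\<forall>a d. (\<integral>E. norm (proj (orthogonal_comp E) a) ^ (2 * d) \<partial>M1) =
                             (\<integral>E. norm (proj (orthogonal_comp E) a) ^ (2 * d) \<partial>M2))"
      by (rule key_equiv[OF kp1 f2 s12])
    have sub1: "subspace E" if "E \<in> space M1" for E
      using that sets_eq_imp_space_eq[OF s1] by (simp add: space_grass_borel grass_def)
    have sp12: "space M1 = space M2" by (rule sets_eq_imp_space_eq[OF s12])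
    have pw1: "norm (proj (orthogonal_comp E) a) ^ (2 * d) = ((norm a)\<^sup>2 - (norm (proj E a))\<^sup>2) ^ d"
      if "subspace E" for E and a :: 'a and d
      using norm_proj_orth_sq[OF that, of a] by (simp add: power_mult)
    have pw2: "norm (proj E a) ^ (2 * d) = ((norm a)\<^sup>2 - (norm (proj (orthogonal_comp E) a))\<^sup>2) ^ d"
      if "subspace E" for E and a :: 'a and d
      using norm_proj_orth_sq[OF that, of a] by (simp add: power_mult)
    have eqv: "(\<forall>a d. (\<integral>E. norm (proj E a) ^ (2 * d) \<partial>M1) = (\<integral>E. norm (proj E a) ^ (2 * d) \<partial>M2)) \<longleftrightarrow>
               (\<forall>a d. (\<integral>E. norm (proj (orthogonal_comp E) a) ^ (2 * d) \<partial>M1) =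
                       (\<integral>E. norm (proj (orthogonal_comp E) a) ^ (2 * d) \<partial>M2))"
    proof (intro iffI allI)
      fix a :: 'a and d :: nat
      assume H: "\<forall>a d. (\<integral>E. norm (proj E a) ^ (2 * d) \<partial>M1) = (\<integral>E. norm (proj E a) ^ (2 * d) \<partial>M2)"
      have um: "(\<lambda>E. (norm (proj E a))\<^sup>2) \<in> borel_measurable M1"
        using keyset.hm[OF k1, of a] by measurable
      have "(\<integral>E. ((norm a)\<^sup>2 - (norm (proj E a))\<^sup>2) ^ d \<partial>M1) = (\<integral>E. ((norm a)\<^sup>2 - (norm (proj E a))\<^sup>2) ^ d \<partial>M2)"
      proof (rule binom_moments[OF f1 f2 s12 um, where C="(norm a)\<^sup>2"])
        show "\<bar>(norm (proj E a))\<^sup>2\<bar> \<le> (norm a)\<^sup>2" if "E \<in> space M1" for E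
          using norm_proj_le[OF sub1[OF that], of a] by (simp add: power_mono)
        show "(\<integral>E. ((norm (proj E a))\<^sup>2) ^ i \<partial>M1) = (\<integral>E. ((norm (proj E a))\<^sup>2) ^ i \<partial>M2)" for i
          using H by (simp add: power_mult[symmetric])
      qed
      moreover have "(\<integral>E. norm (proj (orthogonal_comp E) a) ^ (2 * d) \<partial>M) = (\<integral>E. ((norm a)\<^sup>2 - (norm (proj E a))\<^sup>2) ^ d \<partial>M)"
        if "space M = space M1" for M :: "'a set measure"
        by (rule Bochner_Integration.integral_cong[OF refl]) (use pw1 sub1 that in auto)
      ultimately show "(\<integral>E. norm (proj (orthogonal_comp E) a) ^ (2 * d) \<partial>M1) =
                       (\<integral>E. norm (proj (orthogonal_comp E) a) ^ (2 * d) \<partial>M2)"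
        using sp12 by simp
    next
      fix a :: 'a and d :: nat
      assume H: "\<forall>a d. (\<integral>E. norm (proj (orthogonal_comp E) a) ^ (2 * d) \<partial>M1) =
                       (\<integral>E. norm (proj (orthogonal_comp E) a) ^ (2 * d) \<partial>M2)"
      have um: "(\<lambda>E. (norm (proj (orthogonal_comp E) a))\<^sup>2) \<in> borel_measurable M1"
        using keyset.hm[OF kp1, of a] by measurable
      have "(\<integral>E. ((norm a)\<^sup>2 - (norm (proj (orthogonal_comp E) a))\<^sup>2) ^ d \<partial>M1) =
            (\<integral>E. ((norm a)\<^sup>2 - (norm (proj (orthogonal_comp E) a))\<^sup>2) ^ d \<partial>M2)"
      proof (rule binom_moments[OF f1 f2 s12 um, where C="(norm a)\<^sup>2"])
        show "\<bar>(norm (proj (orthogonal_comp E) a))\<^sup>2\<bar> \<le> (norm a)\<^sup>2" if "E \<in> space M1" for E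
          using norm_proj_le[OF subspace_orthogonal_comp, of E a] by (simp add: power_mono)
        show "(\<integral>E. ((norm (proj (orthogonal_comp E) a))\<^sup>2) ^ i \<partial>M1) =
              (\<integral>E. ((norm (proj (orthogonal_comp E) a))\<^sup>2) ^ i \<partial>M2)" for i
          using H by (simp add: power_mult[symmetric])
      qed
      moreover have "(\<integral>E. norm (proj E a) ^ (2 * d) \<partial>M) =
                     (\<integral>E. ((norm a)\<^sup>2 - (norm (proj (orthogonal_comp E) a))\<^sup>2) ^ d \<partial>M)"
        if "space M = space M1" for M :: "'a set measure"
        by (rule Bochner_Integration.integral_cong[OF refl]) (use pw2 sub1 that in auto)
      ultimately show "(\<integral>E. norm (proj E a) ^ (2 * d) \<partial>M1) = (\<integral>E. norm (proj E a) ^ (2 * d) \<partial>M2)"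
        using sp12 by simp
    qed
    show ?thesis using L R R2 eqv by simp
  qed
  show ?thesis
  proof (intro set_eqI iffI)
    fix \<mu> :: "'a set measure \<times> 'a set measure"
    assume a: "\<mu> \<in> ker_Rstar (DIM('a) - k)"
    obtain M1 M2 where mu: "\<mu> = (M1, M2)" by (cases \<mu>)
    have sm: "(M1, M2) \<in> signed_measures (grass_borel m)" using a mu by (simp add: ker_Rstar_def m_def)
    have "\<forall>f::'a \<Rightarrow> real. continuous_on (sphere 0 1) f \<longrightarrow> signed_integral (M1, M2) (radon f) = 0"
      using a mu by (simp add: ker_Rstar_def)
    then have "perp_measure k (M1, M2) \<in> ker_Rstar k" using main[OF sm] by simp
    then show "\<mu> \<in> {\<mu> \<in> signed_measures (grass_borel (DIM('a) - k)). perp_measure k \<mu> \<in> ker_Rstar k}"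
      using sm mu by (simp add: m_def)
  next
    fix \<mu> :: "'a set measure \<times> 'a set measure"
    assume a: "\<mu> \<in> {\<mu> \<in> signed_measures (grass_borel (DIM('a) - k)). perp_measure k \<mu> \<in> ker_Rstar k}"
    obtain M1 M2 where mu: "\<mu> = (M1, M2)" by (cases \<mu>)
    have sm: "(M1, M2) \<in> signed_measures (grass_borel m)" using a mu by (simp add: m_def)
    have "perp_measure k (M1, M2) \<in> ker_Rstar k" using a mu by simp
    then have "\<forall>f::'a \<Rightarrow> real. continuous_on (sphere 0 1) f \<longrightarrow> signed_integral (M1, M2) (radon f) = 0"
      using main[OF sm] by simp
    then show "\<mu> \<in> ker_Rstar (DIM('a) - k)" using sm mu by (simp add: ker_Rstar_def m_def)
  qed
qed


end
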